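(* Assume all of the following: - Assumption 1: $\{Y(0),Y(1)\}\perp\!\!\!\perp A\mid X$, and $\epsilon<\mathbb{P}(A=1\mid X=x)<1-\epsilon$ for all $x$, for some constant $0<\epsilon<1/2$. - Condition 1: $\Psi(\beta)$ is continuously differentiable in $\beta$ near $\beta^\dagger$; $\beta\in[0,M]$ with $\beta^\dagger$ interior to $[0,M]$; and $|\partial\Psi(\beta^\dagger)/\partial\beta|\ge c>0$. - Condition 2: for every $\beta$, the random variable $\tau(X)-\beta\,\mathrm{THR}_U(X)$ has a bounded density. - Condition 3: $\max_{1\le k\le K}\|\hat\tau^{(-k)}-\tau\|_\infty=O_{\mathbb P}(a_N)$ and $\max_{1\le k\le K}\|\widehat{\mathrm{THR}}_U^{(-k)}-\mathrm{THR}_U\|_\infty=O_{\mathbb P}(r_N)$, where $a_N$ and $r_N$ are positive sequences converging to $0$. Then $$U(\pi^\dagger_\lambda)-U(\hat\pi^\dagger_\lambda)\le O_{\mathbb P}(a_N^2\vee r_N^2\vee N^{-1}),$$ where $a\vee b=\max\{a,b\}$.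
   Context: Setting. Tuples $\{X,A,Y(1),Y(0)\}$ are drawn from a superpopulation, with binary treatment $A$ and binary potential outcomes $Y(a)\in\{0,1\}$. The observed outcome is $Y=AY(1)+(1-A)Y(0)$, and we observe an i.i.d. sample $\{(X_i,A_i,Y_i)\}_{i=1}^N$. Notation: - $\mu_a(x)=\mathbb{E}(Y\mid A=a,X=x)$. - $\tau(x)=\mathbb{E}\{Y(1)-Y(0)\mid X=x\}=\mu_1(x)-\mu_0(x)$. - $\mathrm{THR}_U(x)=\min\{\mu_0(x),1-\mu_1(x)\}$. - $\lambda$ is a fixed threshold. - $\Psi(\beta)=\mathbb{E}[\mathrm{THR}_U(X)\,\mathbb{I}\{\tau(X)-\beta\,\mathrm{THR}_U(X)>0\}]-\lambda$, and $\beta^\dagger$ solves $\Psi(\beta)=0$. - Target rule: $\pi^\dagger_\lambda(x)=\mathbb{I}\{\tau(x)-\beta^\dagger\,\mathrm{THR}_U(x)>0\}$. Estimation procedure. - Split $\{1,\dots,N\}$ at random into $K$ folds $\mathcal I_1,\dots,\mathcal I_K$ of size $N/K$, with $K$ fixed. - $\hat\tau^{(-k)}$ and $\widehat{\mathrm{THR}}_U^{(-k)}$ are estimators fitted on the complement of $\mathcal I_k$. - $\hat\beta^{(k)}\in[0,M]$ solves $$|\mathcal I_k|^{-1}\sum_{i\in\mathcal I_k}\widehat{\mathrm{THR}}_U^{(-k)}(X_i)\,\mathbb{I}\{\hat\tau^{(-k)}(X_i)-\beta\,\widehat{\mathrm{THR}}_U^{(-k)}(X_i)>0\}=\lambda .$$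 - For a fixed fold $k$, the estimated rule is $$\hat\pi^\dagger_\lambda(x)=\mathbb{I}\{\hat\tau^{(-k)}(x)-\hat\beta^{(k)}\,\widehat{\mathrm{THR}}_U^{(-k)}(x)>0\}.$$ Utility. $U(\pi)=\mathbb{E}[\pi(X)\{\tau(X)-\beta^\dagger\,\mathrm{THR}_U(X)\}]$, with the expectation over $X$ only and the rule held fixed. *)

theory Defs
  imports "HOL-Probability.Probability"
begin

text \<open>An observation (X, A, Y).\<close>
type_synonym 'x obs = "'x \<times> bool \<times> bool"

text \<open>Superpopulation of (X, (A, Y(0), Y(1))): X has law PX, and given X = x the triple
  (A, Y(0), Y(1)) has the (regular conditional) law kappa x.\<close>
definition superpop :: "'x measure \<Rightarrow> ('x \<Rightarrow> (bool \<times> bool \<times> bool) pmf) \<Rightarrow> ('x \<times> (bool \<times> bool \<times> bool)) measure" where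
  "superpop PX \<kappa> = density (PX \<Otimes>\<^sub>M count_space UNIV) (\<lambda>(x, t). ennreal (pmf (\<kappa> x) t))"

definition obs_of :: "'x \<times> (bool \<times> bool \<times> bool) \<Rightarrow> 'x obs" where
  "obs_of = (\<lambda>(x, a, y0, y1). (x, a, if a then y1 else y0))"

definition obs_dist :: "'x measure \<Rightarrow> ('x \<Rightarrow> (bool \<times> bool \<times> bool) pmf) \<Rightarrow> 'x obs measure" where
  "obs_dist PX \<kappa> = distr (superpop PX \<kappa>) (PX \<Otimes>\<^sub>M count_space UNIV \<Otimes>\<^sub>M count_space UNIV) obs_of"

definition sample_space :: "'x measure \<Rightarrow> ('x \<Rightarrow> (bool \<times> bool \<times> bool) pmf) \<Rightarrow> nat \<Rightarrow> (nat \<Rightarrow> 'x obs) measure" where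
  "sample_space PX \<kappa> N = PiM {..<N} (\<lambda>_. obs_dist PX \<kappa>)"

definition propensity :: "('x \<Rightarrow> (bool \<times> bool \<times> bool) pmf) \<Rightarrow> 'x \<Rightarrow> real" where
  "propensity \<kappa> x = measure_pmf.prob (\<kappa> x) {(a, y0, y1). a}"

text \<open>mu_a(x) = E(Y | A = a, X = x).\<close>
definition mu :: "('x \<Rightarrow> (bool \<times> bool \<times> bool) pmf) \<Rightarrow> bool \<Rightarrow> 'x \<Rightarrow> real" where
  "mu \<kappa> a x =
     measure_pmf.prob (\<kappa> x) {(a', y0, y1). a' = a \<and> (if a' then y1 else y0)}
     / measure_pmf.prob (\<kappa> x) {(a', y0, y1). a' = a}"

definition tau :: "('x \<Rightarrow> (bool \<times> bool \<times> bool) pmf) \<Rightarrow> 'x \<Rightarrow> real" where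
  "tau \<kappa> x = measure_pmf.expectation (\<kappa> x) (\<lambda>(a, y0, y1). of_bool y1 - of_bool y0)"

definition THR :: "('x \<Rightarrow> (bool \<times> bool \<times> bool) pmf) \<Rightarrow> 'x \<Rightarrow> real" where
  "THR \<kappa> x = min (mu \<kappa> False x) (1 - mu \<kappa> True x)"

definition Psi :: "'x measure \<Rightarrow> ('x \<Rightarrow> (bool \<times> bool \<times> bool) pmf) \<Rightarrow> real \<Rightarrow> real \<Rightarrow> real" where
  "Psi PX \<kappa> lam \<beta> = (\<integral>x. THR \<kappa> x * of_bool (tau \<kappa> x - \<beta> * THR \<kappa> x > 0) \<partial>PX) - lam"

definition rule :: "('x \<Rightarrow> real) \<Rightarrow> ('x \<Rightarrow> real) \<Rightarrow> real \<Rightarrow> 'x \<Rightarrow> real" where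
  "rule t h \<beta> x = of_bool (t x - \<beta> * h x > 0)"

definition utility :: "'x measure \<Rightarrow> ('x \<Rightarrow> (bool \<times> bool \<times> bool) pmf) \<Rightarrow> real \<Rightarrow> ('x \<Rightarrow> real) \<Rightarrow> real" where
  "utility PX \<kappa> \<beta>d \<pi> = (\<integral>x. \<pi> x * (tau \<kappa> x - \<beta>d * THR \<kappa> x) \<partial>PX)"

definition fold_set :: "(nat \<Rightarrow> nat) \<Rightarrow> nat \<Rightarrow> nat \<Rightarrow> nat set" where
  "fold_set fld N k = {i. i < N \<and> fld i = k}"

text \<open>Empirical estimating function on fold I (before subtracting lambda).\<close>
definition Psi_hat :: "nat set \<Rightarrow> ('x \<Rightarrow> real) \<Rightarrow> ('x \<Rightarrow> real) \<Rightarrow> (nat \<Rightarrow> 'x obs) \<Rightarrow> real \<Rightarrow> real" where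
  "Psi_hat I h t \<omega> \<beta> =
     (\<Sum>i\<in>I. h (fst (\<omega> i)) * of_bool (t (fst (\<omega> i)) - \<beta> * h (fst (\<omega> i)) > 0)) / real (card I)"

definition sup_dist :: "'x measure \<Rightarrow> ('x \<Rightarrow> real) \<Rightarrow> ('x \<Rightarrow> real) \<Rightarrow> ereal" where
  "sup_dist PX f g = (SUP x\<in>space PX. ereal \<bar>f x - g x\<bar>)"

text \<open>Z_N \<le> O_P(r_N): for every eta > 0 there are C and N0 such that for N \<ge> N0 the event
  {Z_N > C r_N} has (outer) probability < eta.\<close>
definition OP_upper :: "(nat \<Rightarrow> 'w measure) \<Rightarrow> (nat \<Rightarrow> 'w \<Rightarrow> ereal) \<Rightarrow> (nat \<Rightarrow> real) \<Rightarrow> bool" where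
  "OP_upper \<Omega> Z r \<longleftrightarrow>
     (\<forall>\<eta>>0. \<exists>C N0. \<forall>N\<ge>N0. \<exists>E\<in>sets (\<Omega> N).
        {\<omega>\<in>space (\<Omega> N). Z N \<omega> > ereal (C * r N)} \<subseteq> E \<and> measure (\<Omega> N) E < \<eta>)"

end

theory Submission
  imports Defs
begin

lemma indep_coords:
  fixes P :: "'a measure" and I :: "'i set"
  assumes P: "prob_space P" and I: "I \<noteq> {}"
  shows "prob_space.indep_vars (PiM I (\<lambda>_. P)) (\<lambda>_. P) (\<lambda>i x. x i) I"
proof -
  have Q: "prob_space (PiM I (\<lambda>_. P))" by (rule prob_space_PiM) (simp add: P)
  obtain p0 where p0: "p0 \<in> space P" using prob_space.not_empty[OF P] by auto
  define X where "X = (\<lambda>i x. if i \<in> I then x i else p0)"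
  have rv: "\<And>i. X i \<in> measurable (PiM I (\<lambda>_. P)) P"
  proof -
    fix i show "X i \<in> measurable (PiM I (\<lambda>_. P)) P"
      by (cases "i \<in> I") (use p0 in \<open>auto simp: X_def\<close>)
  qed
  have "prob_space.indep_vars (PiM I (\<lambda>_. P)) (\<lambda>_. P) X I"
  proof (subst prob_space.indep_vars_iff_distr_eq_PiM[OF Q I rv])
    have c: "distr (PiM I (\<lambda>_. P)) P (X i) = P" if "i \<in> I" for i
      using distr_PiM_component[of I "\<lambda>_. P" i] P that by (simp add: X_def)
    have "distr (PiM I (\<lambda>_. P)) (PiM I (\<lambda>_. P)) (\<lambda>x. \<lambda>i\<in>I. X i x) = PiM I (\<lambda>_. P)"
      by (subst distr_cong[where g="\<lambda>x. x"]) (auto simp: X_def space_PiM PiE_def extensional_def restrict_def fun_eq_iff)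
    also have "\<dots> = PiM I (\<lambda>i. distr (PiM I (\<lambda>_. P)) P (X i))"
      by (rule PiM_cong) (auto simp: c)
    finally show "distr (PiM I (\<lambda>_. P)) (PiM I (\<lambda>_. P)) (\<lambda>x. \<lambda>i\<in>I. X i x) = PiM I (\<lambda>i. distr (PiM I (\<lambda>_. P)) P (X i))" .
  qed
  then show ?thesis
    by (subst prob_space.indep_vars_cong[OF Q, where Y=X and N'="\<lambda>_. P" and J=I]) (auto simp: X_def)
qed

lemma exp_neg_le_inv: "y > 0 \<Longrightarrow> exp (- y) \<le> 1 / (y::real)"
proof -
  assume y: "y > 0"
  have "1 + y \<le> exp y" by (rule exp_ge_add_one_self)
  then have "y \<le> exp y" by linarith
  then show ?thesis using y by (simp add: exp_minus field_simps)
qed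

lemma iid_conc:
  fixes P :: "'a measure" and I :: "'i set" and g :: "'a \<Rightarrow> real" and e b :: real
  assumes P: "prob_space P" and fin: "finite I" and I: "I \<noteq> {}" and g[measurable]: "g \<in> borel_measurable P"
    and bd: "\<forall>z\<in>space P. \<bar>g z\<bar> \<le> b" and b: "b > 0" and e: "e > 0"
  shows "measure (PiM I (\<lambda>_. P)) {x \<in> space (PiM I (\<lambda>_. P)). e \<le> \<bar>(\<Sum>i\<in>I. g (x i)) / card I - integral\<^sup>L P g\<bar>}
           \<le> 4 * b\<^sup>2 / (card I * e\<^sup>2)"
proof -
  let ?Q = "PiM I (\<lambda>_. P)"
  have Q: "prob_space ?Q" by (rule prob_space_PiM) (simp add: P)
  have ind: "prob_space.indep_vars ?Q (\<lambda>_. P) (\<lambda>i x. x i) I" by (rule indep_coords[OF P I])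
  have ind2: "prob_space.indep_vars ?Q (\<lambda>_. borel) (\<lambda>i x. g (x i)) I"
    using prob_space.indep_vars_compose2[OF Q ind, of "\<lambda>i. g" "\<lambda>_. borel"] g by auto
  have ex: "prob_space.expectation ?Q (\<lambda>x. g (x i)) = integral\<^sup>L P g" if "i \<in> I" for i
  proof -
    have "integral\<^sup>L P g = integral\<^sup>L (distr ?Q P (\<lambda>x. x i)) g"
      using distr_PiM_component[of I "\<lambda>_. P" i] P that by simp
    also have "\<dots> = prob_space.expectation ?Q (\<lambda>x. g (x i))"
      by (rule integral_distr) (use that in auto)
    finally show ?thesis by simp
  qed
  define \<mu> where "\<mu> = (\<Sum>i\<in>I. prob_space.expectation ?Q (\<lambda>x. g (x i)))"
  have mu: "\<mu> = card I * integral\<^sup>L P g" using ex by (simp add: \<mu>_def)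
  interpret H: Hoeffding_ineq ?Q I "\<lambda>i x. g (x i)" "\<lambda>_. - b" "\<lambda>_. b" \<mu>
  proof unfold_locales
    show "finite I" by fact
    show "prob_space.indep_vars ?Q (\<lambda>_. borel) (\<lambda>i x. g (x i)) I" by fact
    show "\<And>i. i \<in> I \<Longrightarrow> AE x in ?Q. g (x i) \<in> {- b..b}"
      using bd by (intro AE_I2) (force simp: space_PiM PiE_def Pi_def abs_le_iff)
    show "\<mu> \<equiv> (\<Sum>i\<in>I. prob_space.expectation ?Q (\<lambda>x. g (x i)))" by (simp add: \<mu>_def)
    show "emeasure ?Q (space ?Q) = 1" using Q by (simp add: prob_space.emeasure_space_1)
    then show "emeasure ?Q (space ?Q) \<noteq> \<top>" by simp
    show "\<exists>A. countable A \<and> A \<subseteq> sets ?Q \<and> \<Union> A = space ?Q \<and> (\<forall>a\<in>A. emeasure ?Q a \<noteq> \<infinity>)"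
      using sigma_finite_measure.sigma_finite_countable[OF prob_space_imp_sigma_finite[OF Q]] by blast
  qed
  let ?n = "real (card I)"
  have n: "?n > 0" using fin I by (simp add: card_gt_0_iff)
  have "{x \<in> space ?Q. e \<le> \<bar>(\<Sum>i\<in>I. g (x i)) / card I - integral\<^sup>L P g\<bar>}
        = {x \<in> space ?Q. ?n * e \<le> \<bar>(\<Sum>i\<in>I. g (x i)) - \<mu>\<bar>}"
  proof -
    have "e \<le> \<bar>s / ?n - integral\<^sup>L P g\<bar> \<longleftrightarrow> ?n * e \<le> \<bar>s - \<mu>\<bar>" for s
    proof -
      have "s - \<mu> = ?n * (s / ?n - integral\<^sup>L P g)" using n by (simp add: mu field_simps)
      then have "\<bar>s - \<mu>\<bar> = ?n * \<bar>s / ?n - integral\<^sup>L P g\<bar>" using n by (simp add: abs_mult)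
      then show ?thesis using n by (simp add: mult_le_cancel_left_pos)
    qed
    then show ?thesis by simp
  qed
  also have "measure ?Q \<dots> \<le> 2 * exp (-2 * (?n * e)\<^sup>2 / (\<Sum>i\<in>I. (b - - b)\<^sup>2))"
    by (rule H.Hoeffding_ineq_abs_ge) (use n e b in auto)
  also have "(-2 * (?n * e)\<^sup>2 / (\<Sum>i\<in>I. (b - - b)\<^sup>2)) = - (?n * e\<^sup>2 / (2 * b\<^sup>2))"
    using n b by (simp add: power2_eq_square field_simps)
  also have "2 * exp (- (?n * e\<^sup>2 / (2 * b\<^sup>2))) \<le> 2 * (1 / (?n * e\<^sup>2 / (2 * b\<^sup>2)))"
    by (intro mult_left_mono exp_neg_le_inv) (use n e b in auto)
  also have "\<dots> = 4 * b\<^sup>2 / (card I * e\<^sup>2)" using n e b by (simp add: field_simps)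
  finally show ?thesis .
qed

lemma slice_bound:
  fixes P :: "'a measure"
  assumes P: "prob_space P" and fin: "finite I" "finite J" and disj: "I \<inter> J = {}"
    and F: "F \<in> sets (PiM (I \<union> J) (\<lambda>_. P))"
    and sl: "\<forall>y \<in> space (PiM J (\<lambda>_. P)). measure (PiM I (\<lambda>_. P)) {x \<in> space (PiM I (\<lambda>_. P)). merge I J (x,y) \<in> F} \<le> \<delta>"
  shows "measure (PiM (I \<union> J) (\<lambda>_. P)) F \<le> \<delta>"
proof -
  interpret PS: product_sigma_finite "\<lambda>_. P"
    by (simp add: product_sigma_finite_def prob_space_imp_sigma_finite P)
  have QJ: "prob_space (PiM J (\<lambda>_. P))" by (rule prob_space_PiM) (simp add: P)
  have QI: "prob_space (PiM I (\<lambda>_. P))" by (rule prob_space_PiM) (simp add: P)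
  have QIJ: "prob_space (PiM (I \<union> J) (\<lambda>_. P))" by (rule prob_space_PiM) (simp add: P)
  obtain y0 where y0: "y0 \<in> space (PiM J (\<lambda>_. P))" using prob_space.not_empty[OF QJ] by blast
  have d0: "0 \<le> \<delta>" using sl y0 measure_nonneg order_trans by blast
  have F': "F \<in> sets (PiM (J \<union> I) (\<lambda>_. P))" using F by (simp add: Un_commute)
  have "emeasure (PiM (J \<union> I) (\<lambda>_. P)) F
      = (\<integral>\<^sup>+y. emeasure (PiM I (\<lambda>_. P)) ((\<lambda>x. merge J I (y, x)) -` F \<inter> space (PiM I (\<lambda>_. P))) \<partial>PiM J (\<lambda>_. P))"
    by (rule PS.emeasure_fold_integral) (use fin disj F' in auto)
  also have "\<dots> \<le> (\<integral>\<^sup>+y. ennreal \<delta> \<partial>PiM J (\<lambda>_. P))"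
  proof (rule nn_integral_mono)
    fix y assume y: "y \<in> space (PiM J (\<lambda>_. P))"
    have eq: "(\<lambda>x. merge J I (y, x)) -` F \<inter> space (PiM I (\<lambda>_. P)) = {x \<in> space (PiM I (\<lambda>_. P)). merge I J (x,y) \<in> F}"
      using merge_commute[OF disj, of _ y] by auto
    have "emeasure (PiM I (\<lambda>_. P)) {x \<in> space (PiM I (\<lambda>_. P)). merge I J (x,y) \<in> F}
        = ennreal (measure (PiM I (\<lambda>_. P)) {x \<in> space (PiM I (\<lambda>_. P)). merge I J (x,y) \<in> F})"
      using QI by (simp add: finite_measure.emeasure_eq_measure prob_space.finite_measure)
    also have "\<dots> \<le> ennreal \<delta>" using sl y by (simp add: ennreal_leI)
    finally show "emeasure (PiM I (\<lambda>_. P)) ((\<lambda>x. merge J I (y, x)) -` F \<inter> space (PiM I (\<lambda>_. P))) \<le> ennreal \<delta>"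
      by (simp add: eq)
  qed
  also have "\<dots> = ennreal \<delta>" using QJ by (simp add: prob_space.emeasure_space_1)
  finally have "emeasure (PiM (I \<union> J) (\<lambda>_. P)) F \<le> ennreal \<delta>" by (simp add: Un_commute)
  then show ?thesis using QIJ d0 by (simp add: finite_measure.emeasure_eq_measure prob_space.finite_measure)
qed

lemma tau_sum: "tau \<kappa> x = (\<Sum>t\<in>UNIV. (case t of (a, y0, y1) \<Rightarrow> of_bool y1 - of_bool y0) * pmf (\<kappa> x) t)"
  unfolding tau_def by (subst integral_measure_pmf[where A=UNIV]) (auto simp: case_prod_unfold mult.commute)

lemma prob_sum: "measure_pmf.prob (p :: (bool \<times> bool \<times> bool) pmf) S = (\<Sum>t\<in>S. pmf p t)"
  by (rule measure_measure_pmf_finite) simp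

lemma tau_bound: "\<bar>tau \<kappa> x\<bar> \<le> 1"
proof -
  have "\<bar>tau \<kappa> x\<bar> \<le> (\<Sum>t\<in>UNIV. \<bar>(case t of (a, y0, y1) \<Rightarrow> of_bool y1 - of_bool y0) * pmf (\<kappa> x) t\<bar>)"
    unfolding tau_sum by (rule sum_abs)
  also have "\<dots> \<le> (\<Sum>t\<in>UNIV. pmf (\<kappa> x) t)"
    by (intro sum_mono) (auto simp: abs_mult split: prod.splits)
  also have "\<dots> = 1" by (rule sum_pmf_eq_1) auto
  finally show ?thesis .
qed

lemma mu_bound: "0 \<le> mu \<kappa> a x \<and> mu \<kappa> a x \<le> 1"
proof -
  let ?p = "measure_pmf.prob (\<kappa> x) {(a', y0, y1). a' = a \<and> (if a' then y1 else y0)}"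
  let ?q = "measure_pmf.prob (\<kappa> x) {(a', y0, y1). a' = a}"
  have "?p \<le> ?q" by (rule measure_pmf.finite_measure_mono) auto
  moreover have "0 \<le> ?p" by simp
  ultimately show ?thesis unfolding mu_def
    by (cases "?q = 0") (auto simp: divide_le_eq_1 less_le)
qed

lemma THR_bound: "0 \<le> THR \<kappa> x \<and> THR \<kappa> x \<le> 1"
  using mu_bound[of \<kappa> False x] mu_bound[of \<kappa> True x] unfolding THR_def by auto

lemma tau_meas:
  assumes "\<forall>t. (\<lambda>x. pmf (\<kappa> x) t) \<in> borel_measurable PX"
  shows "tau \<kappa> \<in> borel_measurable PX"
  unfolding tau_sum[abs_def] using assms by (intro borel_measurable_sum borel_measurable_times) auto

lemma mu_meas:
  assumes "\<forall>t. (\<lambda>x. pmf (\<kappa> x) t) \<in> borel_measurable PX"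
  shows "mu \<kappa> a \<in> borel_measurable PX"
  unfolding mu_def[abs_def] prob_sum using assms by (intro borel_measurable_divide borel_measurable_sum) auto

lemma THR_meas:
  assumes "\<forall>t. (\<lambda>x. pmf (\<kappa> x) t) \<in> borel_measurable PX"
  shows "THR \<kappa> \<in> borel_measurable PX"
  unfolding THR_def[abs_def] using mu_meas[OF assms] by measurable


lemma sets_obs_dist: "sets (obs_dist PX \<kappa>) = sets (PX \<Otimes>\<^sub>M count_space UNIV \<Otimes>\<^sub>M count_space UNIV)"
  by (simp add: obs_dist_def)

lemma space_obs_dist: "space (obs_dist PX \<kappa>) = space PX \<times> UNIV \<times> UNIV"
  by (simp add: obs_dist_def space_pair_measure)

lemma obs_of_meas:
  "obs_of \<in> measurable (PX \<Otimes>\<^sub>M (count_space UNIV :: (bool \<times> bool \<times> bool) measure))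
                       (PX \<Otimes>\<^sub>M count_space UNIV \<Otimes>\<^sub>M count_space UNIV)"
proof -
  have "(\<lambda>z::bool \<times> bool \<times> bool. (fst z, if fst z then snd (snd z) else fst (snd z)))
        \<in> measurable (count_space UNIV) (count_space UNIV \<Otimes>\<^sub>M count_space UNIV)"
    by (simp add: measurable_count_space_eq1 space_pair_measure)
  then have m2: "(\<lambda>z. (fst (snd z), if fst (snd z) then snd (snd (snd z)) else fst (snd (snd z))))
        \<in> measurable (PX \<Otimes>\<^sub>M (count_space UNIV :: (bool \<times> bool \<times> bool) measure)) (count_space UNIV \<Otimes>\<^sub>M count_space UNIV)"
    by (rule measurable_compose[OF measurable_snd])
  have eq: "obs_of = (\<lambda>z. (fst z, (fst (snd z), if fst (snd z) then snd (snd (snd z)) else fst (snd (snd z)))))"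
    by (auto simp: obs_of_def fun_eq_iff split: prod.splits)
  show ?thesis unfolding eq by (rule measurable_Pair[OF measurable_fst m2])
qed

lemma dens_meas:
  assumes km: "\<forall>t. (\<lambda>x. pmf (\<kappa> x) t) \<in> borel_measurable PX"
  shows "(\<lambda>(x, t). ennreal (pmf (\<kappa> x) t)) \<in> borel_measurable (PX \<Otimes>\<^sub>M (count_space UNIV :: (bool \<times> bool \<times> bool) measure))"
proof -
  have "(\<lambda>z. (\<lambda>t z. ennreal (pmf (\<kappa> (fst z)) t)) (snd z) z) \<in> borel_measurable (PX \<Otimes>\<^sub>M (count_space UNIV :: (bool \<times> bool \<times> bool) measure))"
  proof (rule measurable_compose_countable'[where I=UNIV and f="\<lambda>t z. ennreal (pmf (\<kappa> (fst z)) t)" and g=snd])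
    fix t :: "bool \<times> bool \<times> bool"
    have "(\<lambda>x. ennreal (pmf (\<kappa> x) t)) \<in> borel_measurable PX" using spec[OF km, of t] by (intro measurable_compose[OF _ measurable_ennreal])
    then show "(\<lambda>z. ennreal (pmf (\<kappa> (fst z)) t)) \<in> borel_measurable (PX \<Otimes>\<^sub>M (count_space UNIV :: (bool \<times> bool \<times> bool) measure))"
      by (rule measurable_compose[OF measurable_fst])
  qed (simp_all)
  then show ?thesis by (simp add: case_prod_unfold)
qed

lemma obs_marginal:
  assumes PX: "prob_space PX" and km: "\<forall>t. (\<lambda>x. pmf (\<kappa> x) t) \<in> borel_measurable PX"
  shows "distr (obs_dist PX \<kappa>) PX fst = PX"
proof (rule measure_eqI)
  show "sets (distr (obs_dist PX \<kappa>) PX fst) = sets PX" by simp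
  fix A assume A: "A \<in> sets (distr (obs_dist PX \<kappa>) PX fst)"
  then have A': "A \<in> sets PX" by simp
  have fm: "fst \<in> measurable (obs_dist PX \<kappa>) PX"
    unfolding measurable_cong_sets[OF sets_obs_dist refl] by (rule measurable_fst)
  let ?C = "count_space UNIV :: (bool \<times> bool \<times> bool) measure"
  interpret C: sigma_finite_measure ?C by (rule sigma_finite_measure_count_space_finite) simp
  have "emeasure (distr (obs_dist PX \<kappa>) PX fst) A = emeasure (obs_dist PX \<kappa>) (fst -` A \<inter> space (obs_dist PX \<kappa>))"
    by (rule emeasure_distr[OF fm A'])
  also have "\<dots> = emeasure (superpop PX \<kappa>) (obs_of -` (fst -` A \<inter> space (obs_dist PX \<kappa>)) \<inter> space (superpop PX \<kappa>))"
    unfolding obs_dist_def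
  proof (rule emeasure_distr)
    show "obs_of \<in> measurable (superpop PX \<kappa>) (PX \<Otimes>\<^sub>M count_space UNIV \<Otimes>\<^sub>M count_space UNIV)"
      unfolding superpop_def measurable_cong_sets[OF sets_density refl] by (rule obs_of_meas)
    show "fst -` A \<inter> space (distr (superpop PX \<kappa>) (PX \<Otimes>\<^sub>M count_space UNIV \<Otimes>\<^sub>M count_space UNIV) obs_of)
      \<in> sets (PX \<Otimes>\<^sub>M count_space UNIV \<Otimes>\<^sub>M count_space UNIV)"
      using fm A' unfolding obs_dist_def by (simp add: measurable_sets)
  qed
  also have "obs_of -` (fst -` A \<inter> space (obs_dist PX \<kappa>)) \<inter> space (superpop PX \<kappa>) = A \<times> UNIV"
    using sets.sets_into_space[OF A']
    by (auto simp: obs_of_def space_obs_dist superpop_def space_pair_measure)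
  also have "emeasure (superpop PX \<kappa>) (A \<times> UNIV) = (\<integral>\<^sup>+z\<in>A \<times> UNIV. ennreal (pmf (\<kappa> (fst z)) (snd z)) \<partial>(PX \<Otimes>\<^sub>M ?C))"
    unfolding superpop_def
    by (subst emeasure_density) (use dens_meas[OF km] A' in \<open>auto simp: case_prod_unfold\<close>)
  also have "\<dots> = (\<integral>\<^sup>+x. \<integral>\<^sup>+t. indicator (A \<times> UNIV) (x, t) * ennreal (pmf (\<kappa> x) t) \<partial>?C \<partial>PX)"
  proof -
    have mI: "(\<lambda>z. indicator (A \<times> UNIV) z * ennreal (pmf (\<kappa> (fst z)) (snd z))) \<in> borel_measurable (PX \<Otimes>\<^sub>M ?C)"
      using dens_meas[OF km] A' by (auto simp: case_prod_unfold)
    show ?thesis using C.nn_integral_fst[OF mI] by (simp add: mult.commute)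
  qed
  also have "\<dots> = (\<integral>\<^sup>+x. indicator A x \<partial>PX)"
  proof (rule nn_integral_cong)
    fix x
    have "(\<integral>\<^sup>+t. indicator (A \<times> UNIV) (x, t) * ennreal (pmf (\<kappa> x) t) \<partial>?C) = indicator A x * (\<integral>\<^sup>+t. ennreal (pmf (\<kappa> x) t) \<partial>?C)"
      by (subst nn_integral_cmult[symmetric]) (auto simp: indicator_def)
    also have "(\<integral>\<^sup>+t. ennreal (pmf (\<kappa> x) t) \<partial>?C) = 1"
      by (subst nn_integral_count_space_finite) (auto simp: sum_ennreal sum_pmf_eq_1)
    finally show "(\<integral>\<^sup>+t. indicator (A \<times> UNIV) (x, t) * ennreal (pmf (\<kappa> x) t) \<partial>?C) = indicator A x" by simp
  qed
  also have "\<dots> = emeasure PX A" using A' by simp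
  finally show "emeasure (distr (obs_dist PX \<kappa>) PX fst) A = emeasure PX A" .
qed

lemma obs_prob:
  assumes PX: "prob_space PX" and km: "\<forall>t. (\<lambda>x. pmf (\<kappa> x) t) \<in> borel_measurable PX"
  shows "prob_space (obs_dist PX \<kappa>)"
proof
  have fm: "fst \<in> measurable (obs_dist PX \<kappa>) PX"
    unfolding measurable_cong_sets[OF sets_obs_dist refl] by (rule measurable_fst)
  have "emeasure (obs_dist PX \<kappa>) (space (obs_dist PX \<kappa>)) = emeasure (distr (obs_dist PX \<kappa>) PX fst) (space PX)"
  proof -
    have "fst -` space PX \<inter> space (obs_dist PX \<kappa>) = space (obs_dist PX \<kappa>)" by (auto simp: space_obs_dist)
    then show ?thesis by (subst emeasure_distr[OF fm]) auto
  qed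
  also have "\<dots> = 1" using obs_marginal[OF PX km] PX by (simp add: prob_space.emeasure_space_1)
  finally show "emeasure (obs_dist PX \<kappa>) (space (obs_dist PX \<kappa>)) = 1" .
qed

lemma obs_integral:
  assumes PX: "prob_space PX" and km: "\<forall>t. (\<lambda>x. pmf (\<kappa> x) t) \<in> borel_measurable PX"
    and h: "(h :: 'x \<Rightarrow> real) \<in> borel_measurable PX"
  shows "(\<integral>z. h (fst z) \<partial>obs_dist PX \<kappa>) = (\<integral>x. h x \<partial>PX)"
proof -
  have fm: "fst \<in> measurable (obs_dist PX \<kappa>) PX"
    unfolding measurable_cong_sets[OF sets_obs_dist refl] by (rule measurable_fst)
  have "(\<integral>x. h x \<partial>PX) = (\<integral>x. h x \<partial>distr (obs_dist PX \<kappa>) PX fst)" using obs_marginal[OF PX km] by simp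
  also have "\<dots> = (\<integral>z. h (fst z) \<partial>obs_dist PX \<kappa>)" by (rule integral_distr[OF fm h])
  finally show ?thesis by simp
qed

lemma bnd_int:
  fixes f :: "'a \<Rightarrow> real"
  assumes "prob_space M" "f \<in> borel_measurable M" "\<forall>x\<in>space M. \<bar>f x\<bar> \<le> b"
  shows "integrable M f"
  using assms by (intro finite_measure.integrable_const_bound[where B=b] prob_space.finite_measure AE_I2) auto

lemma deriv_nonpos:
  fixes f :: "real \<Rightarrow> real"
  assumes mono: "\<And>x y. x \<le> y \<Longrightarrow> f y \<le> f x" and d: "(f has_real_derivative D) (at x0)"
  shows "D \<le> 0"
proof (rule ccontr)
  assume "\<not> D \<le> 0"
  then obtain d where "d > 0" "\<forall>h>0. h < d \<longrightarrow> f x0 < f (x0 + h)"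
    using DERIV_pos_inc_right[OF d] by auto
  then have "f x0 < f (x0 + d/2)" by auto
  moreover have "f (x0 + d/2) \<le> f x0" using mono \<open>d > 0\<close> by auto
  ultimately show False by simp
qed

lemma deriv_local:
  fixes f :: "real \<Rightarrow> real"
  assumes d: "(f has_real_derivative D) (at x0)" and f0: "f x0 = 0" and Dc: "D \<le> - c" and c: "c > 0"
  shows "\<exists>\<delta>>0. \<forall>h. 0 < h \<and> h < \<delta> \<longrightarrow> f (x0 + h) \<le> - (c * h / 2) \<and> f (x0 - h) \<ge> c * h / 2"
proof -
  obtain s where s: "s > 0" "\<forall>h. h \<noteq> 0 \<and> norm (h - 0) < s \<longrightarrow> norm ((f (x0 + h) - f x0) / h - D) < c/2"
    using LIM_D[OF DERIV_D[OF d], of "c/2"] c by auto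
  show ?thesis
  proof (intro exI[of _ s] conjI allI impI)
    show "s > 0" by fact
    fix h assume h: "0 < h \<and> h < s"
    have q1: "\<bar>f (x0 + h) / h - D\<bar> < c/2" using s(2)[rule_format, of h] h f0 by auto
    have q2: "\<bar>f (x0 - h) / (- h) - D\<bar> < c/2" using s(2)[rule_format, of "-h"] h f0 by auto
    have "f (x0 + h) / h < - c/2" using q1 Dc by linarith
    then show "f (x0 + h) \<le> - (c * h / 2)" using h by (simp add: field_simps)
    have "f (x0 - h) / (- h) < - c/2" using q2 Dc by linarith
    then have "f (x0 - h) / h > c/2" by (simp add: field_simps)
    then show "f (x0 - h) \<ge> c * h / 2" using h by (simp add: field_simps)
  qed
qed

lemma margin:
  fixes Z :: "'x \<Rightarrow> real"
  assumes PX: "prob_space PX" and Zm: "Z \<in> borel_measurable PX"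
    and f: "f \<in> borel_measurable lborel" "\<forall>t. 0 \<le> f t \<and> f t \<le> B"
    and D: "distr PX lborel Z = density lborel (\<lambda>t. ennreal (f t))"
    and u: "u \<ge> 0"
  shows "measure PX {x \<in> space PX. \<bar>Z x\<bar> \<le> u} \<le> 2 * B * u"
proof -
  have Zl: "Z \<in> measurable PX lborel" using Zm by (simp add: measurable_cong_sets[OF refl sets_lborel])
  have B0: "B \<ge> 0" using f(2) order_trans by blast
  have set: "{x \<in> space PX. \<bar>Z x\<bar> \<le> u} = Z -` {-u..u} \<inter> space PX" by auto
  have "emeasure PX {x \<in> space PX. \<bar>Z x\<bar> \<le> u} = emeasure (distr PX lborel Z) {-u..u}"
    unfolding set by (rule emeasure_distr[symmetric, OF Zl]) simp
  also have "\<dots> = (\<integral>\<^sup>+t\<in>{-u..u}. ennreal (f t) \<partial>lborel)"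
    unfolding D by (rule emeasure_density) (use f in auto)
  also have "\<dots> \<le> (\<integral>\<^sup>+t. ennreal B * indicator {-u..u} t \<partial>lborel)"
    by (intro nn_integral_mono) (use f in \<open>auto simp: indicator_def intro!: ennreal_leI\<close>)
  also have "\<dots> = ennreal B * ennreal (2 * u)"
    using u by (subst nn_integral_cmult_indicator) auto
  also have "\<dots> = ennreal (2 * B * u)" using B0 u by (simp add: ennreal_mult[symmetric] mult.commute mult.left_commute)
  finally show ?thesis
    using PX B0 u by (simp add: finite_measure.emeasure_eq_measure prob_space.finite_measure)
qed

lemma int_of_bool:
  assumes "prob_space M" "{x \<in> space M. P x} \<in> sets M"
  shows "(\<integral>x. of_bool (P x) \<partial>M) = measure M {x \<in> space M. P x}"
proof -
  have "(\<integral>x. of_bool (P x) \<partial>M) = (\<integral>x. indicator {x \<in> space M. P x} x \<partial>M)"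
    by (rule Bochner_Integration.integral_cong) (auto simp: indicator_def)
  also have "\<dots> = measure M ({x \<in> space M. P x} \<inter> space M)" by (rule Bochner_Integration.integral_indicator)
  also have "{x \<in> space M. P x} \<inter> space M = {x \<in> space M. P x}" by auto
  finally show ?thesis .
qed

lemma mean_upper:
  fixes th hh :: "'x \<Rightarrow> real"
  assumes PX: "prob_space PX" and km: "\<forall>t. (\<lambda>x. pmf (\<kappa> x) t) \<in> borel_measurable PX"
    and th[measurable]: "th \<in> borel_measurable PX" and hh[measurable]: "hh \<in> borel_measurable PX"
    and good: "\<forall>x\<in>space PX. \<bar>th x - tau \<kappa> x\<bar> \<le> \<alpha> \<and> \<bar>hh x - THR \<kappa> x\<bar> \<le> \<rho>"
    and a0: "\<alpha> \<ge> 0" and r0: "\<rho> \<ge> 0" and t0: "t > 0" and b0: "\<beta>d \<ge> 0" and bM: "\<beta>d + t \<le> M"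
    and marg: "\<forall>u\<ge>0. measure PX {x\<in>space PX. \<bar>tau \<kappa> x - \<beta>d * THR \<kappa> x\<bar> \<le> u} \<le> 2 * B * u"
  shows "(\<integral>x. hh x * of_bool (th x - (\<beta>d + t) * hh x > 0) \<partial>PX)
     \<le> \<rho> + (Psi PX \<kappa> lam (\<beta>d + t/2) + lam) + (2 * (\<alpha> + M * \<rho>) / t) * (2 * B * (\<alpha> + M * \<rho> + t))"
proof -
  define s where "s = \<alpha> + M * \<rho>"
  have M0: "M \<ge> 0" using b0 t0 bM by linarith
  have s0: "s \<ge> 0" using a0 r0 M0 by (simp add: s_def)
  have taum[measurable]: "tau \<kappa> \<in> borel_measurable PX" by (rule tau_meas[OF km])
  have THRm[measurable]: "THR \<kappa> \<in> borel_measurable PX" by (rule THR_meas[OF km])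
  let ?Z = "\<lambda>x. tau \<kappa> x - \<beta>d * THR \<kappa> x"
  let ?L = "\<lambda>x. hh x * of_bool (th x - (\<beta>d + t) * hh x > 0)"
  let ?R1 = "\<lambda>x. THR \<kappa> x * of_bool (tau \<kappa> x - (\<beta>d + t/2) * THR \<kappa> x > 0)"
  let ?R2 = "\<lambda>x. of_bool (\<bar>?Z x\<bar> \<le> s + t) :: real"
  have pt: "?L x \<le> \<rho> + ?R1 x + (2 * s / t) * ?R2 x" if x: "x \<in> space PX" for x
  proof -
    define T where "T = THR \<kappa> x"
    define ta where "ta = tau \<kappa> x"
    have T01: "0 \<le> T" "T \<le> 1" using THR_bound[of \<kappa> x] by (auto simp: T_def)
    have g1: "\<bar>th x - ta\<bar> \<le> \<alpha>" and g2: "\<bar>hh x - T\<bar> \<le> \<rho>" using good x by (auto simp: T_def ta_def)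
    have st: "2 * s / t \<ge> 0" using s0 t0 by simp
    have R1: "?R1 x \<ge> 0" "?R2 x \<ge> 0" using T01 by (auto simp: T_def)
    have R2': "(2 * s / t) * ?R2 x \<ge> 0" using st R1(2) by (rule mult_nonneg_nonneg)
    have hT: "hh x \<le> T + \<rho>" using g2 by (simp add: abs_le_iff)
    show ?thesis
    proof (cases "th x - (\<beta>d + t) * hh x > 0 \<and> hh x > 0")
      case False
      then have "?L x \<le> 0" by auto
      then show ?thesis using R1 r0 st by (smt (verit) mult_nonneg_nonneg)
    next
      case True
      then have pos: "th x - (\<beta>d + t) * hh x > 0" and hp: "hh x > 0" by auto
      have L: "?L x = hh x" using pos by simp
      have e1: "(\<beta>d + t) * T \<le> (\<beta>d + t) * hh x + (\<beta>d + t) * \<rho>"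
      proof -
        have "T \<le> hh x + \<rho>" using g2 by (simp add: abs_le_iff)
        then have "(\<beta>d + t) * T \<le> (\<beta>d + t) * (hh x + \<rho>)" using b0 t0 by (intro mult_left_mono) auto
        then show ?thesis by (simp add: distrib_left)
      qed
      have e2: "(\<beta>d + t) * \<rho> \<le> M * \<rho>" using bM r0 by (simp add: mult_right_mono)
      have zs: "ta - \<beta>d * T - t * T > - s"
        using pos e1 e2 g1 unfolding s_def by (simp add: algebra_simps)
      show ?thesis
      proof (cases "ta - (\<beta>d + t/2) * T > 0")
        case True
        then have "?R1 x = T" by (simp add: T_def ta_def)
        then show ?thesis using L hT R2' by linarith
      next
        case False
        then have f1: "ta - \<beta>d * T - (t/2) * T \<le> 0" by (simp add: algebra_simps)
        have "(t/2) * T < s" using f1 zs by linarith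
        then have Ts: "T \<le> 2 * s / t" using t0 by (simp add: field_simps)
        have tT: "t * T \<le> t" using T01 t0 by simp
        have tT0: "t * T \<ge> 0" using T01 t0 by simp
        have h2: "(t/2) * T = t * T / 2" by simp
        have "\<bar>ta - \<beta>d * T\<bar> \<le> s + t" using f1 zs tT tT0 h2 s0 t0 unfolding abs_le_iff by linarith
        then have "?R2 x = 1" by (simp add: T_def ta_def)
        then have "(2 * s / t) * ?R2 x = 2 * s / t" by simp
        then show ?thesis using L hT Ts R1(1) by linarith
      qed
    qed
  qed
  have iL: "integrable PX ?L"
  proof (rule bnd_int[OF PX, where b="1 + \<rho>"])
    show "?L \<in> borel_measurable PX" by measurable
    show "\<forall>x\<in>space PX. \<bar>?L x\<bar> \<le> 1 + \<rho>"
    proof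
      fix x assume x: "x \<in> space PX"
      have "\<bar>hh x\<bar> \<le> 1 + \<rho>" using good x THR_bound[of \<kappa> x] by (auto simp: abs_le_iff)
      then show "\<bar>?L x\<bar> \<le> 1 + \<rho>" by (auto simp: abs_mult r0)
    qed
  qed
  have iR1: "integrable PX ?R1"
    by (rule bnd_int[OF PX, where b=1]) (auto simp: THR_bound abs_mult abs_le_iff intro: order_trans[OF _ conjunct2[OF THR_bound]])
  have setm: "{x \<in> space PX. \<bar>?Z x\<bar> \<le> s + t} \<in> sets PX" by measurable
  have iR2: "integrable PX ?R2" by (rule bnd_int[OF PX, where b=1]) auto
  have iR: "integrable PX (\<lambda>x. \<rho> + ?R1 x + (2 * s / t) * ?R2 x)"
    using iR1 iR2 finite_measure.integrable_const[OF prob_space.finite_measure[OF PX]]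
    by (intro Bochner_Integration.integrable_add integrable_mult_right)
  have "(\<integral>x. ?L x \<partial>PX) \<le> (\<integral>x. \<rho> + ?R1 x + (2 * s / t) * ?R2 x \<partial>PX)"
    by (rule integral_mono[OF iL iR]) (use pt in auto)
  also have "\<dots> = \<rho> + (\<integral>x. ?R1 x \<partial>PX) + (2 * s / t) * (\<integral>x. ?R2 x \<partial>PX)"
  proof -
    have ic: "integrable PX (\<lambda>x. \<rho>)" using finite_measure.integrable_const[OF prob_space.finite_measure[OF PX]] .
    have c1: "(\<integral>x. \<rho> \<partial>PX) = \<rho>" using PX by (simp add: prob_space.prob_space)
    have "(\<integral>x. \<rho> + ?R1 x + (2 * s / t) * ?R2 x \<partial>PX) = (\<integral>x. \<rho> + ?R1 x \<partial>PX) + (\<integral>x. (2 * s / t) * ?R2 x \<partial>PX)"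
      by (rule Bochner_Integration.integral_add) (use ic iR1 iR2 in \<open>auto intro!: Bochner_Integration.integrable_add integrable_mult_right\<close>)
    also have "(\<integral>x. \<rho> + ?R1 x \<partial>PX) = (\<integral>x. \<rho> \<partial>PX) + (\<integral>x. ?R1 x \<partial>PX)"
      by (rule Bochner_Integration.integral_add[OF ic iR1])
    also have "(\<integral>x. (2 * s / t) * ?R2 x \<partial>PX) = (2 * s / t) * (\<integral>x. ?R2 x \<partial>PX)"
      by (rule integral_mult_right_zero)
    finally show ?thesis using c1 by simp
  qed
  finally have main: "(\<integral>x. ?L x \<partial>PX) \<le> \<rho> + (\<integral>x. ?R1 x \<partial>PX) + (2 * s / t) * (\<integral>x. ?R2 x \<partial>PX)" .
  have e1: "(\<integral>x. ?R1 x \<partial>PX) = Psi PX \<kappa> lam (\<beta>d + t/2) + lam" by (simp add: Psi_def)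
  have "(\<integral>x. ?R2 x \<partial>PX) = measure PX {x \<in> space PX. \<bar>?Z x\<bar> \<le> s + t}"
    by (rule int_of_bool[OF PX setm])
  also have "\<dots> \<le> 2 * B * (s + t)" using marg s0 t0 by simp
  finally have e2: "(\<integral>x. ?R2 x \<partial>PX) \<le> 2 * B * (s + t)" .
  have st: "2 * s / t \<ge> 0" using s0 t0 by simp
  have "(2 * s / t) * (\<integral>x. ?R2 x \<partial>PX) \<le> (2 * s / t) * (2 * B * (s + t))"
    by (rule mult_left_mono[OF e2 st])
  then show ?thesis using main e1 unfolding s_def by linarith
qed


lemma mean_lower:
  fixes th hh :: "'x \<Rightarrow> real"
  assumes PX: "prob_space PX" and km: "\<forall>t. (\<lambda>x. pmf (\<kappa> x) t) \<in> borel_measurable PX"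
    and th[measurable]: "th \<in> borel_measurable PX" and hh[measurable]: "hh \<in> borel_measurable PX"
    and good: "\<forall>x\<in>space PX. \<bar>th x - tau \<kappa> x\<bar> \<le> \<alpha> \<and> \<bar>hh x - THR \<kappa> x\<bar> \<le> \<rho>"
    and a0: "\<alpha> \<ge> 0" and r0: "\<rho> \<ge> 0" and t0: "t > 0" and b0: "\<beta>d - t \<ge> 0" and bM: "\<beta>d \<le> M"
    and marg: "\<forall>u\<ge>0. measure PX {x\<in>space PX. \<bar>tau \<kappa> x - \<beta>d * THR \<kappa> x\<bar> \<le> u} \<le> 2 * B * u"
  shows "(\<integral>x. hh x * of_bool (th x - (\<beta>d - t) * hh x > 0) \<partial>PX)
     \<ge> - \<rho> + (Psi PX \<kappa> lam (\<beta>d - t/2) + lam) - (2 * (\<alpha> + M * \<rho>) / t) * (2 * B * (\<alpha> + M * \<rho> + t))"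
proof -
  define s where "s = \<alpha> + M * \<rho>"
  have M0: "M \<ge> 0" using b0 t0 bM by linarith
  have s0: "s \<ge> 0" using a0 r0 M0 by (simp add: s_def)
  have taum[measurable]: "tau \<kappa> \<in> borel_measurable PX" by (rule tau_meas[OF km])
  have THRm[measurable]: "THR \<kappa> \<in> borel_measurable PX" by (rule THR_meas[OF km])
  let ?Z = "\<lambda>x. tau \<kappa> x - \<beta>d * THR \<kappa> x"
  let ?L = "\<lambda>x. hh x * of_bool (th x - (\<beta>d - t) * hh x > 0)"
  let ?R1 = "\<lambda>x. THR \<kappa> x * of_bool (tau \<kappa> x - (\<beta>d - t/2) * THR \<kappa> x > 0)"
  let ?R2 = "\<lambda>x. of_bool (\<bar>?Z x\<bar> \<le> s + t) :: real"
  have pt: "- \<rho> + ?R1 x - (2 * s / t) * ?R2 x \<le> ?L x" if x: "x \<in> space PX" for x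
  proof -
    define T where "T = THR \<kappa> x"
    define ta where "ta = tau \<kappa> x"
    have T01: "0 \<le> T" "T \<le> 1" using THR_bound[of \<kappa> x] by (auto simp: T_def)
    have g1: "\<bar>th x - ta\<bar> \<le> \<alpha>" and g2: "\<bar>hh x - T\<bar> \<le> \<rho>" using good x by (auto simp: T_def ta_def)
    have st: "2 * s / t \<ge> 0" using s0 t0 by simp
    have R1: "?R1 x \<ge> 0" "?R2 x \<ge> 0" "?R1 x \<le> T" using T01 by (auto simp: T_def)
    have R2': "(2 * s / t) * ?R2 x \<ge> 0" using st R1(2) by (rule mult_nonneg_nonneg)
    have hT: "hh x \<le> T + \<rho>" "T - \<rho> \<le> hh x" using g2 by (simp_all add: abs_le_iff)
    have Lr: "?L x \<ge> - \<rho>" using hT T01 r0 by auto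
    have p1: "(\<beta>d - t) * T = \<beta>d * T - t * T" by (simp add: algebra_simps)
    have p2: "(\<beta>d - t/2) * T = \<beta>d * T - t * T / 2" by (simp add: algebra_simps)
    show ?thesis
    proof (cases "ta - (\<beta>d - t) * T > s")
      case True
      have e1: "(\<beta>d - t) * hh x \<le> (\<beta>d - t) * T + (\<beta>d - t) * \<rho>"
      proof -
        have "(\<beta>d - t) * hh x \<le> (\<beta>d - t) * (T + \<rho>)" using hT(1) b0 by (intro mult_left_mono) auto
        then show ?thesis by (simp add: distrib_left)
      qed
      have e2: "(\<beta>d - t) * \<rho> \<le> M * \<rho>" using bM r0 t0 by (intro mult_right_mono) auto
      have "th x - (\<beta>d - t) * hh x > 0" using True e1 e2 g1 unfolding s_def abs_le_iff by linarith
      then have "?L x = hh x" by simp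
      then show ?thesis using hT R1 R2' by linarith
    next
      case False
      then have F1: "ta - (\<beta>d - t) * T \<le> s" by simp
      show ?thesis
      proof (cases "ta - (\<beta>d - t/2) * T > 0")
        case False
        then have "?R1 x = 0" by (simp add: T_def ta_def)
        then show ?thesis using Lr R2' by linarith
      next
        case True
        then have T1: "ta - (\<beta>d - t/2) * T > 0" .
        have tT: "t * T \<le> t" using T01 t0 by simp
        have tT0: "t * T \<ge> 0" using T01 t0 by simp
        have T1': "ta - \<beta>d * T + t * T / 2 > 0" using T1 unfolding p2 by simp
        have F1': "ta - \<beta>d * T + t * T \<le> s" using F1 unfolding p1 by simp
        have "t * T / 2 < s" using T1' F1' by linarith
        then have Ts: "T \<le> 2 * s / t" using t0 by (simp add: field_simps)
        have "\<bar>ta - \<beta>d * T\<bar> \<le> s + t" using T1' F1' tT tT0 s0 t0 unfolding abs_le_iff by linarith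
        then have "?R2 x = 1" by (simp add: T_def ta_def)
        then have "(2 * s / t) * ?R2 x = 2 * s / t" by simp
        then show ?thesis using Lr R1(3) Ts by linarith
      qed
    qed
  qed
  have iL: "integrable PX ?L"
  proof (rule bnd_int[OF PX, where b="1 + \<rho>"])
    show "?L \<in> borel_measurable PX" by measurable
    show "\<forall>x\<in>space PX. \<bar>?L x\<bar> \<le> 1 + \<rho>"
    proof
      fix x assume x: "x \<in> space PX"
      have "\<bar>hh x\<bar> \<le> 1 + \<rho>" using good x THR_bound[of \<kappa> x] by (auto simp: abs_le_iff)
      then show "\<bar>?L x\<bar> \<le> 1 + \<rho>" by (auto simp: abs_mult r0)
    qed
  qed
  have iR1: "integrable PX ?R1"
    by (rule bnd_int[OF PX, where b=1]) (auto simp: THR_bound abs_mult abs_le_iff intro: order_trans[OF _ conjunct2[OF THR_bound]])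
  have setm: "{x \<in> space PX. \<bar>?Z x\<bar> \<le> s + t} \<in> sets PX" by measurable
  have iR2: "integrable PX ?R2" by (rule bnd_int[OF PX, where b=1]) auto
  have ic: "integrable PX (\<lambda>x. - \<rho>)" using finite_measure.integrable_const[OF prob_space.finite_measure[OF PX]] .
  have iR: "integrable PX (\<lambda>x. - \<rho> + ?R1 x - (2 * s / t) * ?R2 x)"
    using iR1 iR2 ic by (intro Bochner_Integration.integrable_add Bochner_Integration.integrable_diff integrable_mult_right)
  have "(\<integral>x. - \<rho> + ?R1 x - (2 * s / t) * ?R2 x \<partial>PX) \<le> (\<integral>x. ?L x \<partial>PX)"
    by (rule integral_mono[OF iR iL]) (use pt in auto)
  moreover have "(\<integral>x. - \<rho> + ?R1 x - (2 * s / t) * ?R2 x \<partial>PX) = - \<rho> + (\<integral>x. ?R1 x \<partial>PX) - (2 * s / t) * (\<integral>x. ?R2 x \<partial>PX)"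
  proof -
    have c1: "(\<integral>x. - \<rho> \<partial>PX) = - \<rho>" using PX by (simp add: prob_space.prob_space)
    have "(\<integral>x. - \<rho> + ?R1 x - (2 * s / t) * ?R2 x \<partial>PX) = (\<integral>x. - \<rho> + ?R1 x \<partial>PX) - (\<integral>x. (2 * s / t) * ?R2 x \<partial>PX)"
      by (rule Bochner_Integration.integral_diff) (use ic iR1 iR2 in \<open>auto intro!: Bochner_Integration.integrable_add integrable_mult_right\<close>)
    also have "(\<integral>x. - \<rho> + ?R1 x \<partial>PX) = (\<integral>x. - \<rho> \<partial>PX) + (\<integral>x. ?R1 x \<partial>PX)"
      by (rule Bochner_Integration.integral_add[OF ic iR1])
    also have "(\<integral>x. (2 * s / t) * ?R2 x \<partial>PX) = (2 * s / t) * (\<integral>x. ?R2 x \<partial>PX)"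
      by (rule integral_mult_right_zero)
    finally show ?thesis using c1 by simp
  qed
  ultimately have main: "- \<rho> + (\<integral>x. ?R1 x \<partial>PX) - (2 * s / t) * (\<integral>x. ?R2 x \<partial>PX) \<le> (\<integral>x. ?L x \<partial>PX)" by simp
  have e1: "(\<integral>x. ?R1 x \<partial>PX) = Psi PX \<kappa> lam (\<beta>d - t/2) + lam" by (simp add: Psi_def)
  have "(\<integral>x. ?R2 x \<partial>PX) = measure PX {x \<in> space PX. \<bar>?Z x\<bar> \<le> s + t}"
    by (rule int_of_bool[OF PX setm])
  also have "\<dots> \<le> 2 * B * (s + t)" using marg s0 t0 by simp
  finally have e2: "(\<integral>x. ?R2 x \<partial>PX) \<le> 2 * B * (s + t)" .
  have st: "2 * s / t \<ge> 0" using s0 t0 by simp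
  have "(2 * s / t) * (\<integral>x. ?R2 x \<partial>PX) \<le> (2 * s / t) * (2 * B * (s + t))"
    by (rule mult_left_mono[OF e2 st])
  then show ?thesis using main e1 unfolding s_def by linarith
qed


lemma U_bound:
  fixes th hh :: "'x \<Rightarrow> real"
  assumes PX: "prob_space PX" and km: "\<forall>t. (\<lambda>x. pmf (\<kappa> x) t) \<in> borel_measurable PX"
    and th[measurable]: "th \<in> borel_measurable PX" and hh[measurable]: "hh \<in> borel_measurable PX"
    and good: "\<forall>x\<in>space PX. \<bar>th x - tau \<kappa> x\<bar> \<le> \<alpha> \<and> \<bar>hh x - THR \<kappa> x\<bar> \<le> \<rho>"
    and a0: "\<alpha> \<ge> 0" and r0: "\<rho> \<ge> 0" and t0: "t \<ge> 0"
    and bh: "0 \<le> bh" "bh \<le> M" and bt: "\<bar>bh - \<beta>d\<bar> \<le> t" and b0: "\<beta>d \<ge> 0"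
    and marg: "\<forall>u\<ge>0. measure PX {x\<in>space PX. \<bar>tau \<kappa> x - \<beta>d * THR \<kappa> x\<bar> \<le> u} \<le> 2 * B * u"
  shows "utility PX \<kappa> \<beta>d (rule (tau \<kappa>) (THR \<kappa>) \<beta>d) - utility PX \<kappa> \<beta>d (rule th hh bh)
           \<le> 2 * B * (\<alpha> + M * \<rho> + t)\<^sup>2"
proof -
  define D where "D = \<alpha> + M * \<rho> + t"
  have M0: "M \<ge> 0" using bh by linarith
  have D0: "D \<ge> 0" using a0 r0 t0 M0 by (simp add: D_def)
  have taum[measurable]: "tau \<kappa> \<in> borel_measurable PX" by (rule tau_meas[OF km])
  have THRm[measurable]: "THR \<kappa> \<in> borel_measurable PX" by (rule THR_meas[OF km])
  let ?Z = "\<lambda>x. tau \<kappa> x - \<beta>d * THR \<kappa> x"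
  let ?P1 = "\<lambda>x. rule (tau \<kappa>) (THR \<kappa>) \<beta>d x * ?Z x"
  let ?P2 = "\<lambda>x. rule th hh bh x * ?Z x"
  let ?R = "\<lambda>x. D * of_bool (\<bar>?Z x\<bar> \<le> D)"
  have pt: "?P1 x - ?P2 x \<le> ?R x" if x: "x \<in> space PX" for x
  proof -
    define T where "T = THR \<kappa> x"
    define ta where "ta = tau \<kappa> x"
    define Zh where "Zh = th x - bh * hh x"
    have T01: "0 \<le> T" "T \<le> 1" using THR_bound[of \<kappa> x] by (auto simp: T_def)
    have g1: "\<bar>th x - ta\<bar> \<le> \<alpha>" and g2: "\<bar>hh x - T\<bar> \<le> \<rho>" using good x by (auto simp: T_def ta_def)
    have m1: "\<bar>bh * (hh x - T)\<bar> \<le> M * \<rho>"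
      unfolding abs_mult using bh g2 by (intro mult_mono) auto
    have m2: "\<bar>(bh - \<beta>d) * T\<bar> \<le> t"
    proof -
      have "\<bar>(bh - \<beta>d) * T\<bar> \<le> t * 1" unfolding abs_mult using bt T01 t0 by (intro mult_mono) auto
      then show ?thesis by simp
    qed
    have eq: "Zh - (ta - \<beta>d * T) = (th x - ta) - bh * (hh x - T) - (bh - \<beta>d) * T"
      by (simp add: Zh_def algebra_simps)
    have close: "\<bar>Zh - (ta - \<beta>d * T)\<bar> \<le> D"
      unfolding eq D_def using g1 m1 m2 by (smt (verit))
    have Rnn: "?R x \<ge> 0" using D0 by simp
    show ?thesis
    proof (cases "ta - \<beta>d * T > 0 \<longleftrightarrow> Zh > 0")
      case True
      then have "?P1 x - ?P2 x = 0" by (simp add: rule_def T_def ta_def Zh_def)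
      then show ?thesis using Rnn by linarith
    next
      case False
      have "\<bar>ta - \<beta>d * T\<bar> \<le> D" using False close by (auto simp: abs_le_iff)
      then have R: "?R x = D" by (simp add: T_def ta_def)
      have "?P1 x - ?P2 x \<le> \<bar>ta - \<beta>d * T\<bar>"
        using False by (auto simp: rule_def T_def ta_def Zh_def)
      then show ?thesis using R \<open>\<bar>ta - \<beta>d * T\<bar> \<le> D\<close> by linarith
    qed
  qed
  have Zb: "\<bar>?Z x\<bar> \<le> 1 + \<beta>d" for x
  proof -
    have "\<bar>\<beta>d * THR \<kappa> x\<bar> \<le> \<beta>d * 1" unfolding abs_mult using b0 THR_bound[of \<kappa> x] by (intro mult_mono) auto
    then show ?thesis using tau_bound[of \<kappa> x] by linarith
  qed
  have i1: "integrable PX ?P1"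
  proof (rule bnd_int[OF PX, where b="1 + \<beta>d"])
    show "?P1 \<in> borel_measurable PX" unfolding rule_def by measurable
    show "\<forall>x\<in>space PX. \<bar>?P1 x\<bar> \<le> 1 + \<beta>d"
    proof
      fix x
      have "\<bar>?P1 x\<bar> = \<bar>rule (tau \<kappa>) (THR \<kappa>) \<beta>d x\<bar> * \<bar>?Z x\<bar>" by (simp add: abs_mult)
      also have "\<dots> \<le> 1 * (1 + \<beta>d)" by (intro mult_mono) (auto simp: rule_def Zb b0)
      finally show "\<bar>?P1 x\<bar> \<le> 1 + \<beta>d" by simp
    qed
  qed
  have i2: "integrable PX ?P2"
  proof (rule bnd_int[OF PX, where b="1 + \<beta>d"])
    show "?P2 \<in> borel_measurable PX" unfolding rule_def by measurable
    show "\<forall>x\<in>space PX. \<bar>?P2 x\<bar> \<le> 1 + \<beta>d"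
    proof
      fix x
      have "\<bar>?P2 x\<bar> = \<bar>rule th hh bh x\<bar> * \<bar>?Z x\<bar>" by (simp add: abs_mult)
      also have "\<dots> \<le> 1 * (1 + \<beta>d)" by (intro mult_mono) (auto simp: rule_def Zb b0)
      finally show "\<bar>?P2 x\<bar> \<le> 1 + \<beta>d" by simp
    qed
  qed
  have setm: "{x \<in> space PX. \<bar>?Z x\<bar> \<le> D} \<in> sets PX" by measurable
  have i3': "integrable PX (\<lambda>x. of_bool (\<bar>?Z x\<bar> \<le> D) :: real)" by (rule bnd_int[OF PX, where b=1]) auto
  have i3: "integrable PX ?R" using i3' by (rule integrable_mult_right)
  have "utility PX \<kappa> \<beta>d (rule (tau \<kappa>) (THR \<kappa>) \<beta>d) - utility PX \<kappa> \<beta>d (rule th hh bh) = (\<integral>x. ?P1 x - ?P2 x \<partial>PX)"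
    unfolding utility_def by (rule Bochner_Integration.integral_diff[OF i1 i2, symmetric])
  also have "\<dots> \<le> (\<integral>x. ?R x \<partial>PX)"
    by (rule integral_mono[OF Bochner_Integration.integrable_diff[OF i1 i2] i3]) (use pt in auto)
  also have "\<dots> = D * measure PX {x \<in> space PX. \<bar>?Z x\<bar> \<le> D}"
    by (simp add: int_of_bool[OF PX setm])
  also have "\<dots> \<le> D * (2 * B * D)" using marg D0 by (intro mult_left_mono) auto
  also have "D * (2 * B * D) = 2 * B * D\<^sup>2" by (simp add: power2_eq_square)
  finally show ?thesis by (simp add: D_def)
qed

lemma fst_meas_obs: "fst \<in> measurable (obs_dist PX \<kappa>) PX"
  unfolding measurable_cong_sets[OF sets_obs_dist refl] by (rule measurable_fst)

lemma fold_conc: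
  fixes tf hf :: "(nat \<Rightarrow> 'x obs) \<Rightarrow> 'x \<Rightarrow> real" and \<epsilon> \<beta> :: real
  assumes PX: "prob_space PX" and km: "\<forall>t. (\<lambda>x. pmf (\<kappa> x) t) \<in> borel_measurable PX"
    and disj: "I \<inter> J = {}" and IJ: "I \<union> J = {..<N}" and finI: "finite I" and neI: "I \<noteq> {}"
    and F: "F \<in> sets (PiM {..<N} (\<lambda>_. obs_dist PX \<kappa>))"
    and dep: "\<forall>\<omega>\<in>space (PiM {..<N} (\<lambda>_. obs_dist PX \<kappa>)). \<forall>\<omega>'\<in>space (PiM {..<N} (\<lambda>_. obs_dist PX \<kappa>)).
                 (\<forall>i\<in>J. \<omega> i = \<omega>' i) \<longrightarrow> tf \<omega> = tf \<omega>' \<and> hf \<omega> = hf \<omega>'"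
    and meas: "\<forall>\<omega>\<in>space (PiM {..<N} (\<lambda>_. obs_dist PX \<kappa>)). tf \<omega> \<in> borel_measurable PX \<and> hf \<omega> \<in> borel_measurable PX"
    and Fgood: "\<forall>\<omega>\<in>F. (\<forall>x\<in>space PX. \<bar>hf \<omega> x\<bar> \<le> 2) \<and>
                 \<epsilon> \<le> \<bar>Psi_hat I (hf \<omega>) (tf \<omega>) \<omega> \<beta> - (\<integral>x. hf \<omega> x * of_bool (tf \<omega> x - \<beta> * hf \<omega> x > 0) \<partial>PX)\<bar>"
    and e: "\<epsilon> > 0"
  shows "measure (PiM {..<N} (\<lambda>_. obs_dist PX \<kappa>)) F \<le> 16 / (card I * \<epsilon>\<^sup>2)"
proof -
  let ?P = "obs_dist PX \<kappa>"
  let ?S = "PiM {..<N} (\<lambda>_. ?P)"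
  have Pp: "prob_space ?P" by (rule obs_prob[OF PX km])
  have finJ: "finite J" using IJ by (metis finite_Un finite_lessThan)
  have F': "F \<in> sets (PiM (I \<union> J) (\<lambda>_. ?P))" using F IJ by simp
  have Fsp: "F \<subseteq> space ?S" using sets.sets_into_space[OF F] .
  have mspace: "merge I J (x, y) \<in> space ?S" if "x \<in> space (PiM I (\<lambda>_. ?P))" "y \<in> space (PiM J (\<lambda>_. ?P))" for x y
  proof -
    have "merge I J (x, y) \<in> space (PiM (I \<union> J) (\<lambda>_. ?P))"
      using that disj by (simp add: space_PiM PiE_def)
    then show ?thesis using IJ by simp
  qed
  have "measure (PiM (I \<union> J) (\<lambda>_. ?P)) F \<le> 16 / (card I * \<epsilon>\<^sup>2)"
  proof (rule slice_bound[OF Pp finI finJ disj F'], intro ballI)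
    fix y assume y: "y \<in> space (PiM J (\<lambda>_. ?P))"
    let ?sl = "{x \<in> space (PiM I (\<lambda>_. ?P)). merge I J (x, y) \<in> F}"
    show "measure (PiM I (\<lambda>_. ?P)) ?sl \<le> 16 / (card I * \<epsilon>\<^sup>2)"
    proof (cases "?sl = {}")
      case True
      show ?thesis by (simp only: True measure_empty) simp
    next
      case False
      then obtain x1 where x1: "x1 \<in> space (PiM I (\<lambda>_. ?P))" "merge I J (x1, y) \<in> F" by blast
      define \<omega>1 where "\<omega>1 = merge I J (x1, y)"
      have w1: "\<omega>1 \<in> space ?S" using mspace[OF x1(1) y] by (simp add: \<omega>1_def)
      define th where "th = tf \<omega>1"
      define hh where "hh = hf \<omega>1"
      have thM[measurable]: "th \<in> borel_measurable PX" and hhM[measurable]: "hh \<in> borel_measurable PX"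
        using meas w1 by (auto simp: th_def hh_def)
      have hb: "\<forall>x\<in>space PX. \<bar>hh x\<bar> \<le> 2" using Fgood x1(2) by (simp add: hh_def \<omega>1_def)
      have same: "tf (merge I J (x, y)) = th \<and> hf (merge I J (x, y)) = hh" if x: "x \<in> space (PiM I (\<lambda>_. ?P))" for x
      proof -
        have "\<forall>i\<in>J. merge I J (x, y) i = \<omega>1 i" using disj by (auto simp: \<omega>1_def merge_def)
        from dep[rule_format, OF mspace[OF x y] w1] this show ?thesis by (simp add: th_def hh_def)
      qed
      define g where "g = (\<lambda>z::'x obs. hh (fst z) * of_bool (th (fst z) - \<beta> * hh (fst z) > 0))"
      have fm: "fst \<in> measurable ?P PX" by (rule fst_meas_obs)
      have gm: "g \<in> borel_measurable ?P"
      proof -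
        have "(\<lambda>x. hh x * of_bool (th x - \<beta> * hh x > 0)) \<in> borel_measurable PX" by measurable
        from measurable_compose[OF fm this] show ?thesis by (simp add: g_def comp_def)
      qed
      have gb: "\<forall>z\<in>space ?P. \<bar>g z\<bar> \<le> 2"
      proof
        fix z assume "z \<in> space ?P"
        then have "fst z \<in> space PX" by (auto simp: space_obs_dist)
        then show "\<bar>g z\<bar> \<le> 2" using hb by (auto simp: g_def abs_mult)
      qed
      have gint: "integral\<^sup>L ?P g = (\<integral>x. hh x * of_bool (th x - \<beta> * hh x > 0) \<partial>PX)"
        unfolding g_def by (rule obs_integral[OF PX km, where h="\<lambda>x. hh x * of_bool (th x - \<beta> * hh x > 0)"]) measurable
      have sub: "?sl \<subseteq> {x \<in> space (PiM I (\<lambda>_. ?P)). \<epsilon> \<le> \<bar>(\<Sum>i\<in>I. g (x i)) / card I - integral\<^sup>L ?P g\<bar>}"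
      proof safe
        fix x assume x: "x \<in> space (PiM I (\<lambda>_. ?P))" and xF: "merge I J (x, y) \<in> F"
        have ph: "Psi_hat I hh th (merge I J (x, y)) \<beta> = (\<Sum>i\<in>I. g (x i)) / card I"
          unfolding Psi_hat_def g_def using disj by (intro arg_cong2[where f="(/)"] sum.cong) (auto simp: merge_def)
        show "\<epsilon> \<le> \<bar>(\<Sum>i\<in>I. g (x i)) / card I - integral\<^sup>L ?P g\<bar>"
        proof -
          have e12: "tf (merge I J (x, y)) = th" "hf (merge I J (x, y)) = hh" using same[OF x] by auto
          show ?thesis using conjunct2[OF bspec[OF Fgood xF]] unfolding e12 ph gint .
        qed
      qed
      have Ip: "prob_space (PiM I (\<lambda>_. ?P))" by (rule prob_space_PiM) (simp add: Pp)
      have setm: "{x \<in> space (PiM I (\<lambda>_. ?P)). \<epsilon> \<le> \<bar>(\<Sum>i\<in>I. g (x i)) / card I - integral\<^sup>L ?P g\<bar>} \<in> sets (PiM I (\<lambda>_. ?P))"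
      proof -
        have [measurable]: "g \<in> borel_measurable ?P" by (rule gm)
        have sm: "(\<lambda>x. \<Sum>i\<in>I. g (x i)) \<in> borel_measurable (PiM I (\<lambda>_. ?P))"
        proof (rule borel_measurable_sum)
          fix i assume i: "i \<in> I"
          have "(\<lambda>x. x i) \<in> measurable (PiM I (\<lambda>_. ?P)) ?P" using i by (rule measurable_component_singleton)
          from measurable_compose[OF this gm]
          show "(\<lambda>x. g (x i)) \<in> borel_measurable (PiM I (\<lambda>_. ?P))" .
        qed
        show ?thesis using sm by measurable
      qed
      have "measure (PiM I (\<lambda>_. ?P)) ?sl \<le> measure (PiM I (\<lambda>_. ?P)) {x \<in> space (PiM I (\<lambda>_. ?P)). \<epsilon> \<le> \<bar>(\<Sum>i\<in>I. g (x i)) / card I - integral\<^sup>L ?P g\<bar>}"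
        by (rule finite_measure.finite_measure_mono[OF prob_space.finite_measure[OF Ip] sub setm])
      also have "\<dots> \<le> 4 * 2\<^sup>2 / (card I * \<epsilon>\<^sup>2)"
        using iid_conc[OF Pp finI neI gm gb _ e] by simp
      finally show ?thesis by simp
    qed
  qed
  then show ?thesis using IJ by simp
qed

lemma good_from_sup:
  assumes "\<not> ((SUP j\<in>{..<K}. sup_dist PX (f j) g) > ereal C)" "k < K" "x \<in> space PX"
  shows "\<bar>f k x - g x\<bar> \<le> C"
proof -
  have "ereal \<bar>f k x - g x\<bar> \<le> sup_dist PX (f k) g"
    unfolding sup_dist_def using assms(3) by (rule SUP_upper)
  also have "\<dots> \<le> (SUP j\<in>{..<K}. sup_dist PX (f j) g)"
    using assms(2) by (intro SUP_upper) auto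
  also have "\<dots> \<le> ereal C" using assms(1) by (simp add: not_less)
  finally show ?thesis by simp
qed

lemma Psi_mono:
  assumes PX: "prob_space PX" and km: "\<forall>t. (\<lambda>x. pmf (\<kappa> x) t) \<in> borel_measurable PX"
  shows "\<And>x y. x \<le> y \<Longrightarrow> Psi PX \<kappa> lam y \<le> Psi PX \<kappa> lam x"
proof -
  fix x y :: real assume xy: "x \<le> y"
  have taum[measurable]: "tau \<kappa> \<in> borel_measurable PX" by (rule tau_meas[OF km])
  have THRm[measurable]: "THR \<kappa> \<in> borel_measurable PX" by (rule THR_meas[OF km])
  have int: "integrable PX (\<lambda>z. THR \<kappa> z * of_bool (tau \<kappa> z - b * THR \<kappa> z > 0))" for b
  proof (rule bnd_int[OF PX, where b=1])
    show "\<forall>z\<in>space PX. \<bar>THR \<kappa> z * of_bool (tau \<kappa> z - b * THR \<kappa> z > 0)\<bar> \<le> 1"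
      using THR_bound[of \<kappa>] by (auto simp: abs_mult)
  qed measurable
  have "(\<integral>z. THR \<kappa> z * of_bool (tau \<kappa> z - y * THR \<kappa> z > 0) \<partial>PX) \<le> (\<integral>z. THR \<kappa> z * of_bool (tau \<kappa> z - x * THR \<kappa> z > 0) \<partial>PX)"
  proof (rule integral_mono[OF int int])
    fix z
    have T0: "THR \<kappa> z \<ge> 0" using THR_bound[of \<kappa> z] by simp
    have "x * THR \<kappa> z \<le> y * THR \<kappa> z" using xy T0 by (rule mult_right_mono)
    then show "THR \<kappa> z * of_bool (tau \<kappa> z - y * THR \<kappa> z > 0) \<le> THR \<kappa> z * of_bool (tau \<kappa> z - x * THR \<kappa> z > 0)"
      using T0 by auto
  qed
  then show "Psi PX \<kappa> lam y \<le> Psi PX \<kappa> lam x" by (simp add: Psi_def)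
qed

lemma rate_arith:
  fixes p q g a r D :: real and N :: nat
  assumes "p \<ge> 0" "q \<ge> 0" "g \<ge> 0" "a > 0" "r > 0" "N > 0" "D \<ge> 0"
    and D: "D \<le> p * a + q * r + g / sqrt (real N)"
  shows "D\<^sup>2 \<le> (p + q + g)\<^sup>2 * max (max (a\<^sup>2) (r\<^sup>2)) (1 / real N)"
proof -
  define m where "m = sqrt (max (max (a\<^sup>2) (r\<^sup>2)) (1 / real N))"
  have am: "a \<le> m" unfolding m_def using assms(4)
    by (metis max.cobounded1 real_sqrt_abs real_sqrt_le_mono abs_of_pos order_trans)
  have rm: "r \<le> m" unfolding m_def using assms(5)
    by (metis max.cobounded1 max.cobounded2 real_sqrt_abs real_sqrt_le_mono abs_of_pos order_trans)
  have nm: "1 / sqrt (real N) \<le> m" unfolding m_def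
    by (metis max.cobounded2 real_sqrt_divide real_sqrt_le_mono real_sqrt_one)
  have "D \<le> p * m + q * m + g * m"
  proof -
    have "p * a \<le> p * m" using am assms(1) by (rule mult_left_mono)
    moreover have "q * r \<le> q * m" using rm assms(2) by (rule mult_left_mono)
    moreover have "g / sqrt (real N) \<le> g * m" using mult_left_mono[OF nm assms(3)] by simp
    ultimately show ?thesis using D by linarith
  qed
  then have "D \<le> (p + q + g) * m" by (simp add: algebra_simps)
  then have "D\<^sup>2 \<le> ((p + q + g) * m)\<^sup>2" using assms(7) by (rule power_mono)
  also have "\<dots> = (p + q + g)\<^sup>2 * m\<^sup>2" by (simp add: power_mult_distrib)
  also have "m\<^sup>2 = max (max (a\<^sup>2) (r\<^sup>2)) (1 / real N)" unfolding m_def by (simp add: le_max_iff_disj)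
  finally show ?thesis .
qed

lemma fold_arith:
  fixes K N n :: nat
  assumes "K > 0" "2 * K \<le> N" "N div K \<le> n"
  shows "real N \<le> 2 * real K * real n"
proof -
  have "N = K * (N div K) + N mod K" by simp
  moreover have "N mod K < K" using assms(1) by simp
  moreover have "K * (N div K) \<le> K * n" using assms(3) by simp
  ultimately have "N \<le> K * n + K" by linarith
  then have "N \<le> 2 * (K * n)" using assms(2) by linarith
  then have "real N \<le> real (2 * (K * n))" by (simp only: of_nat_le_iff)
  then show ?thesis by simp
qed

lemma arith_conc:
  fixes K N n :: nat and \<eta> :: real
  assumes "K > 0" "\<eta> > 0" "N > 0" "n > 0" "real N \<le> 2 * real K * real n"
  shows "16 / (real n * (sqrt (256 * real K / \<eta>) / sqrt (real N))\<^sup>2) \<le> \<eta> / 8"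
proof -
  have sq: "(sqrt (256 * real K / \<eta>) / sqrt (real N))\<^sup>2 = 256 * real K / (\<eta> * real N)"
    using assms by (simp add: power_divide)
  have "16 / (real n * (256 * real K / (\<eta> * real N))) = \<eta> * real N / (16 * real K * real n)"
    using assms by (simp add: field_simps)
  also have "\<dots> \<le> \<eta> * (2 * real K * real n) / (16 * real K * real n)"
    using assms by (intro divide_right_mono mult_left_mono) auto
  also have "\<dots> = \<eta> / 8" using assms by (simp add: field_simps)
  finally show ?thesis unfolding sq .
qed

lemma arith_up:
  fixes c B s \<rho> \<epsilon> t \<Psi> m lam :: real
  assumes "c > 0" "B \<ge> 0" "s \<ge> 0" "\<rho> \<ge> 0" "\<epsilon> > 0"
    and t: "t = (4/c) * (\<rho> + 8 * B * s + \<epsilon>) + 2 * s"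
    and P: "\<Psi> \<le> - (c * (t/2) / 2)"
    and m: "m \<le> \<rho> + (\<Psi> + lam) + (2 * s / t) * (2 * B * (s + t))"
  shows "m \<le> lam - \<epsilon>"
proof -
  have bs: "B * s \<ge> 0" using assms by simp
  have x: "(4/c) * (\<rho> + 8 * B * s + \<epsilon>) > 0" using assms(1,4,5) bs by (intro mult_pos_pos) auto
  have t0: "t > 0" using x assms(3) t by linarith
  have st: "2 * s \<le> t" using x t by linarith
  have st2: "s / t \<le> 1/2" using st t0 by (simp add: field_simps)
  have eq: "(2 * s / t) * (2 * B * (s + t)) = 4 * B * s * (s / t) + 4 * B * s"
    using t0 by (simp add: field_simps)
  have "4 * B * s * (s / t) \<le> 4 * B * s * (1/2)"
    using st2 assms by (intro mult_left_mono) auto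
  then have k1: "(2 * s / t) * (2 * B * (s + t)) \<le> 6 * B * s" using eq by simp
  have "c * (t/2) / 2 = c * t / 4" by simp
  also have "c * t / 4 = (\<rho> + 8 * B * s + \<epsilon>) + c * s / 2" using assms(1) t by (simp add: field_simps)
  finally have k2: "c * (t/2) / 2 = (\<rho> + 8 * B * s + \<epsilon>) + c * s / 2" .
  have k3: "c * s / 2 \<ge> 0" using assms by simp
  have k4: "B * s \<ge> 0" using assms by simp
  show ?thesis using m P k1 k2 k3 k4 by linarith
qed

lemma arith_lo:
  fixes c B s \<rho> \<epsilon> t \<Psi> m lam :: real
  assumes "c > 0" "B \<ge> 0" "s \<ge> 0" "\<rho> \<ge> 0" "\<epsilon> > 0"
    and t: "t = (4/c) * (\<rho> + 8 * B * s + \<epsilon>) + 2 * s"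
    and P: "\<Psi> \<ge> c * (t/2) / 2"
    and m: "m \<ge> - \<rho> + (\<Psi> + lam) - (2 * s / t) * (2 * B * (s + t))"
  shows "m \<ge> lam + \<epsilon>"
proof -
  have bs: "B * s \<ge> 0" using assms by simp
  have x: "(4/c) * (\<rho> + 8 * B * s + \<epsilon>) > 0" using assms(1,4,5) bs by (intro mult_pos_pos) auto
  have t0: "t > 0" using x assms(3) t by linarith
  have st: "2 * s \<le> t" using x t by linarith
  have st2: "s / t \<le> 1/2" using st t0 by (simp add: field_simps)
  have eq: "(2 * s / t) * (2 * B * (s + t)) = 4 * B * s * (s / t) + 4 * B * s"
    using t0 by (simp add: field_simps)
  have "4 * B * s * (s / t) \<le> 4 * B * s * (1/2)"
    using st2 assms by (intro mult_left_mono) auto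
  then have k1: "(2 * s / t) * (2 * B * (s + t)) \<le> 6 * B * s" using eq by simp
  have "c * (t/2) / 2 = c * t / 4" by simp
  also have "c * t / 4 = (\<rho> + 8 * B * s + \<epsilon>) + c * s / 2" using assms(1) t by (simp add: field_simps)
  finally have k2: "c * (t/2) / 2 = (\<rho> + 8 * B * s + \<epsilon>) + c * s / 2" .
  have k3: "c * s / 2 \<ge> 0" using assms by simp
  have k4: "B * s \<ge> 0" using assms by simp
  show ?thesis using m P k1 k2 k3 k4 by linarith
qed

lemma meas_ofb:
  fixes u v :: "'a \<Rightarrow> real"
  assumes [measurable]: "u \<in> borel_measurable M" "v \<in> borel_measurable M"
  shows "(\<lambda>w. u w * of_bool (v w - b * u w > 0)) \<in> borel_measurable M"
  by measurable

theorem theorem3: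
  fixes PX :: "'x measure" and \<kappa> :: "'x \<Rightarrow> (bool \<times> bool \<times> bool) pmf"
    and lam M \<beta>d c :: real and K k :: nat
    and fld :: "nat \<Rightarrow> nat \<Rightarrow> nat"
    and tauhat THRhat :: "nat \<Rightarrow> nat \<Rightarrow> (nat \<Rightarrow> 'x obs) \<Rightarrow> 'x \<Rightarrow> real"
    and betahat :: "nat \<Rightarrow> (nat \<Rightarrow> 'x obs) \<Rightarrow> real"
    and a r :: "nat \<Rightarrow> real"
  assumes PX: "prob_space PX"
    and kappa_meas: "\<forall>t. (\<lambda>x. pmf (\<kappa> x) t) \<in> borel_measurable PX"
    \<comment> \<open>Assumption 1: ignorability and positivity\<close>
    and ignorability: "\<forall>x\<in>space PX. \<kappa> x = pair_pmf (map_pmf fst (\<kappa> x)) (map_pmf snd (\<kappa> x))"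
    and positivity: "\<exists>\<epsilon>. 0 < \<epsilon> \<and> \<epsilon> < 1/2 \<and>
                       (\<forall>x\<in>space PX. \<epsilon> < propensity \<kappa> x \<and> propensity \<kappa> x < 1 - \<epsilon>)"
    \<comment> \<open>Condition 1\<close>
    and root: "Psi PX \<kappa> lam \<beta>d = 0"
    and interior: "0 < \<beta>d" "\<beta>d < M"
    and c_pos: "c > 0"
    and C1: "\<exists>\<delta>>0. \<exists>dPsi. (\<forall>\<beta>. \<bar>\<beta> - \<beta>d\<bar> < \<delta> \<longrightarrow>
                  (Psi PX \<kappa> lam has_real_derivative dPsi \<beta>) (at \<beta>))
               \<and> continuous_on {\<beta>d - \<delta><..<\<beta>d + \<delta>} dPsi \<and> \<bar>dPsi \<beta>d\<bar> \<ge> c"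
    \<comment> \<open>Condition 2\<close>
    and C2: "\<forall>\<beta>. \<exists>f B. f \<in> borel_measurable lborel \<and> (\<forall>t. 0 \<le> f t \<and> f t \<le> B) \<and>
               distr PX lborel (\<lambda>x. tau \<kappa> x - \<beta> * THR \<kappa> x) = density lborel (\<lambda>t. ennreal (f t))"
    \<comment> \<open>sample splitting into K balanced folds; k is the fixed fold\<close>
    and K_pos: "0 < K" and k_lt: "k < K"
    and fold_range: "\<forall>N i. i < N \<longrightarrow> fld N i < K"
    and fold_size: "\<forall>N j. j < K \<longrightarrow> N div K \<le> card (fold_set (fld N) N j)
                                   \<and> card (fold_set (fld N) N j) \<le> N div K + 1"
    \<comment> \<open>nuisance estimators fitted on the complement of fold j\<close>
    and training_only: "\<forall>N j \<omega> \<omega>'. j < K \<longrightarrow> \<omega> \<in> space (sample_space PX \<kappa> N) \<longrightarrow>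
               \<omega>' \<in> space (sample_space PX \<kappa> N) \<longrightarrow> (\<forall>i<N. fld N i \<noteq> j \<longrightarrow> \<omega> i = \<omega>' i) \<longrightarrow>
               tauhat N j \<omega> = tauhat N j \<omega>' \<and> THRhat N j \<omega> = THRhat N j \<omega>'"
    and est_meas: "\<forall>N j. j < K \<longrightarrow>
               (\<lambda>(\<omega>, x). tauhat N j \<omega> x) \<in> borel_measurable (sample_space PX \<kappa> N \<Otimes>\<^sub>M PX) \<and>
               (\<lambda>(\<omega>, x). THRhat N j \<omega> x) \<in> borel_measurable (sample_space PX \<kappa> N \<Otimes>\<^sub>M PX)"
    \<comment> \<open>beta-hat on fold k: a (generalized) root in [0,M] of the monotone estimating equation\<close>
    and betahat_meas: "\<forall>N. betahat N \<in> borel_measurable (sample_space PX \<kappa> N)"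
    and betahat_root: "\<forall>N \<omega>. \<omega> \<in> space (sample_space PX \<kappa> N) \<longrightarrow>
               betahat N \<omega> \<in> {0..M} \<and>
               (\<forall>\<beta>\<in>{0..M}. \<beta> < betahat N \<omega> \<longrightarrow>
                  Psi_hat (fold_set (fld N) N k) (THRhat N k \<omega>) (tauhat N k \<omega>) \<omega> \<beta> \<ge> lam) \<and>
               (\<forall>\<beta>\<in>{0..M}. betahat N \<omega> < \<beta> \<longrightarrow>
                  Psi_hat (fold_set (fld N) N k) (THRhat N k \<omega>) (tauhat N k \<omega>) \<omega> \<beta> \<le> lam)"
    \<comment> \<open>Condition 3\<close>
    and a_pos: "\<forall>N. a N > 0" and a_lim: "a \<longlonglongrightarrow> 0"
    and r_pos: "\<forall>N. r N > 0" and r_lim: "r \<longlonglongrightarrow> 0"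
    and tau_rate: "OP_upper (sample_space PX \<kappa>)
               (\<lambda>N \<omega>. SUP j\<in>{..<K}. sup_dist PX (tauhat N j \<omega>) (tau \<kappa>)) a"
    and THR_rate: "OP_upper (sample_space PX \<kappa>)
               (\<lambda>N \<omega>. SUP j\<in>{..<K}. sup_dist PX (THRhat N j \<omega>) (THR \<kappa>)) r"
  shows "OP_upper (sample_space PX \<kappa>)
           (\<lambda>N \<omega>. ereal (utility PX \<kappa> \<beta>d (rule (tau \<kappa>) (THR \<kappa>) \<beta>d)
                         - utility PX \<kappa> \<beta>d (rule (tauhat N k \<omega>) (THRhat N k \<omega>) (betahat N \<omega>))))
           (\<lambda>N. max (max ((a N)\<^sup>2) ((r N)\<^sup>2)) (1 / real N))"
proof -
  let ?S = "sample_space PX \<kappa>"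
  let ?P = "obs_dist PX \<kappa>"
  have Sdef: "\<And>N. ?S N = PiM {..<N} (\<lambda>_. ?P)" by (simp add: sample_space_def)
  have Pp: "prob_space ?P" by (rule obs_prob[OF PX kappa_meas])
  have Sp: "\<And>N. prob_space (?S N)" unfolding sample_space_def by (rule prob_space_PiM) (simp add: Pp)
  have taum[measurable]: "tau \<kappa> \<in> borel_measurable PX" by (rule tau_meas[OF kappa_meas])
  have THRm[measurable]: "THR \<kappa> \<in> borel_measurable PX" by (rule THR_meas[OF kappa_meas])
  obtain \<delta> dPsi where \<delta>: "\<delta> > 0"
    and der: "\<forall>\<beta>. \<bar>\<beta> - \<beta>d\<bar> < \<delta> \<longrightarrow> (Psi PX \<kappa> lam has_real_derivative dPsi \<beta>) (at \<beta>)"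
    and dc: "\<bar>dPsi \<beta>d\<bar> \<ge> c"
    using C1 by blast
  have derd: "(Psi PX \<kappa> lam has_real_derivative dPsi \<beta>d) (at \<beta>d)" using der \<delta> by simp
  have "dPsi \<beta>d \<le> 0" by (rule deriv_nonpos[OF Psi_mono[OF PX kappa_meas] derd])
  with dc have Dc: "dPsi \<beta>d \<le> - c" by linarith
  obtain \<delta>1 where \<delta>1: "\<delta>1 > 0"
    and loc: "\<forall>h. 0 < h \<and> h < \<delta>1 \<longrightarrow> Psi PX \<kappa> lam (\<beta>d + h) \<le> - (c * h / 2) \<and> Psi PX \<kappa> lam (\<beta>d - h) \<ge> c * h / 2"
    using deriv_local[OF derd root Dc c_pos] by blast
  obtain f B where fB: "f \<in> borel_measurable lborel" "\<forall>t. 0 \<le> f t \<and> f t \<le> B"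
    "distr PX lborel (\<lambda>x. tau \<kappa> x - \<beta>d * THR \<kappa> x) = density lborel (\<lambda>t. ennreal (f t))"
    using C2 by blast
  have B0: "B \<ge> 0" using fB(2) order_trans by blast
  have Zm: "(\<lambda>x. tau \<kappa> x - \<beta>d * THR \<kappa> x) \<in> borel_measurable PX" by measurable
  have marg: "\<forall>u\<ge>0. measure PX {x\<in>space PX. \<bar>tau \<kappa> x - \<beta>d * THR \<kappa> x\<bar> \<le> u} \<le> 2 * B * u"
    using margin[OF PX Zm fB] by blast
  show ?thesis
    unfolding OP_upper_def
  proof (intro allI impI)
    fix \<eta> :: real assume \<eta>: "\<eta> > 0"
    have \<eta>4: "\<eta> / 4 > 0" using \<eta> by simp
    obtain Ca Na where CaN: "\<forall>N\<ge>Na. \<exists>E\<in>sets (?S N).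
        {\<omega> \<in> space (?S N). (SUP j\<in>{..<K}. sup_dist PX (tauhat N j \<omega>) (tau \<kappa>)) > ereal (Ca * a N)} \<subseteq> E
        \<and> measure (?S N) E < \<eta> / 4"
      using tau_rate[unfolded OP_upper_def, rule_format, OF \<eta>4] by blast
    obtain Cr Nr where CrN: "\<forall>N\<ge>Nr. \<exists>E\<in>sets (?S N).
        {\<omega> \<in> space (?S N). (SUP j\<in>{..<K}. sup_dist PX (THRhat N j \<omega>) (THR \<kappa>)) > ereal (Cr * r N)} \<subseteq> E
        \<and> measure (?S N) E < \<eta> / 4"
      using THR_rate[unfolded OP_upper_def, rule_format, OF \<eta>4] by blast
    define Ca' where "Ca' = max Ca 0"
    define Cr' where "Cr' = max Cr 0"
    define G where "G = sqrt (256 * real K / \<eta>)"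
    define \<alpha> where "\<alpha> = (\<lambda>N. Ca' * a N)"
    define \<rho> where "\<rho> = (\<lambda>N. Cr' * r N)"
    define s where "s = (\<lambda>N. \<alpha> N + M * \<rho> N)"
    define \<epsilon> where "\<epsilon> = (\<lambda>N::nat. G / sqrt (real N))"
    define t where "t = (\<lambda>N. (4/c) * (\<rho> N + 8 * B * s N + \<epsilon> N) + 2 * s N)"
    have G0: "G > 0" using \<eta> K_pos by (simp add: G_def)
    have Ca'0: "Ca' \<ge> 0" and Cr'0: "Cr' \<ge> 0" by (simp_all add: Ca'_def Cr'_def)
    have M0: "M \<ge> 0" using interior by linarith
    have alim: "\<alpha> \<longlonglongrightarrow> 0"
      using tendsto_mult[OF tendsto_const a_lim, of Ca'] by (simp add: \<alpha>_def)
    have rlim: "\<rho> \<longlonglongrightarrow> 0"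
      using tendsto_mult[OF tendsto_const r_lim, of Cr'] by (simp add: \<rho>_def)
    have elim: "\<epsilon> \<longlonglongrightarrow> 0"
    proof -
      have "filterlim (\<lambda>N::nat. sqrt (real N)) at_top sequentially"
        by (rule filterlim_compose[OF sqrt_at_top filterlim_real_sequentially])
      then have "filterlim (\<lambda>N::nat. sqrt (real N)) at_infinity sequentially"
        by (rule filterlim_at_top_imp_at_infinity)
      from tendsto_divide_0[OF tendsto_const this, of G] show ?thesis by (simp add: \<epsilon>_def)
    qed
    have "t \<longlonglongrightarrow> (4/c) * (0 + 8 * B * (0 + M * 0) + 0) + 2 * (0 + M * 0)"
      unfolding t_def s_def by (intro tendsto_intros alim rlim elim)
    then have tlim: "t \<longlonglongrightarrow> 0" by simp
    define mm where "mm = min \<delta>1 (min \<beta>d (M - \<beta>d))"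
    have mm0: "mm > 0" using \<delta>1 interior by (simp add: mm_def)
    have ev: "eventually (\<lambda>N. t N < mm \<and> \<rho> N < 1) sequentially"
      using order_tendstoD(2)[OF tlim mm0] order_tendstoD(2)[OF rlim, of 1] by (auto elim: eventually_elim2)
    then obtain N1 where N1: "\<forall>N\<ge>N1. t N < mm \<and> \<rho> N < 1" unfolding eventually_sequentially by blast
    define N0 where "N0 = max (max Na Nr) (max N1 (2 * K))"
    define pp where "pp = Ca' * (3 + 32 * B / c)"
    define qq where "qq = Cr' * (3 * M + 4 / c + 32 * B * M / c)"
    define gg where "gg = 4 * G / c"
    define Cf where "Cf = 2 * B * (pp + qq + gg)\<^sup>2"
    show "\<exists>C N0. \<forall>N\<ge>N0. \<exists>E\<in>sets (?S N).
        {\<omega> \<in> space (?S N). ereal (utility PX \<kappa> \<beta>d (rule (tau \<kappa>) (THR \<kappa>) \<beta>d)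
                         - utility PX \<kappa> \<beta>d (rule (tauhat N k \<omega>) (THRhat N k \<omega>) (betahat N \<omega>)))
           > ereal (C * max (max ((a N)\<^sup>2) ((r N)\<^sup>2)) (1 / real N))} \<subseteq> E \<and> measure (?S N) E < \<eta>"
    proof (intro exI[of _ Cf] exI[of _ N0] allI impI)
      fix N assume N: "N0 \<le> N"
      have NNa: "Na \<le> N" and NNr: "Nr \<le> N" and NN1: "N1 \<le> N" and NK: "2 * K \<le> N"
        using N by (auto simp: N0_def)
      have Npos: "N > 0" using NK K_pos by linarith
      obtain Ea where Ea: "Ea \<in> sets (?S N)"
        "{\<omega> \<in> space (?S N). (SUP j\<in>{..<K}. sup_dist PX (tauhat N j \<omega>) (tau \<kappa>)) > ereal (Ca * a N)} \<subseteq> Ea"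
        "measure (?S N) Ea < \<eta> / 4"
        using CaN NNa by blast
      obtain Er where Er: "Er \<in> sets (?S N)"
        "{\<omega> \<in> space (?S N). (SUP j\<in>{..<K}. sup_dist PX (THRhat N j \<omega>) (THR \<kappa>)) > ereal (Cr * r N)} \<subseteq> Er"
        "measure (?S N) Er < \<eta> / 4"
        using CrN NNr by blast
      define I where "I = fold_set (fld N) N k"
      define J where "J = {..<N} - I"
      have disj: "I \<inter> J = {}" by (auto simp: J_def)
      have IJ: "I \<union> J = {..<N}" by (auto simp: J_def I_def fold_set_def)
      have finI: "finite I" by (simp add: I_def fold_set_def)
      have cardI: "N div K \<le> card I" using fold_size k_lt by (simp add: I_def)
      have "2 \<le> N div K" using NK K_pos by (metis div_le_mono nonzero_mult_div_cancel_right not_gr0)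
      then have cI: "card I > 0" using cardI by linarith
      then have neI: "I \<noteq> {}" by auto
      have tN: "t N < mm" "\<rho> N < 1" using N1 NN1 by auto
      have eN: "\<epsilon> N > 0" using G0 Npos by (simp add: \<epsilon>_def)
      have aN: "\<alpha> N \<ge> 0" using Ca'0 a_pos by (simp add: \<alpha>_def less_imp_le)
      have rN: "\<rho> N \<ge> 0" using Cr'0 r_pos by (simp add: \<rho>_def less_imp_le)
      have sN: "s N \<ge> 0" using aN rN M0 by (simp add: s_def)
      have bs: "B * s N \<ge> 0" using B0 sN by simp
      have tpos: "t N > 0"
      proof -
        have "(4/c) * (\<rho> N + 8 * B * s N + \<epsilon> N) > 0" using c_pos rN bs eN by (intro mult_pos_pos) auto
        then show ?thesis using sN by (simp add: t_def)
      qed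
      have tmm: "t N < \<delta>1" "t N < \<beta>d" "t N < M - \<beta>d" using tN(1) by (auto simp: mm_def)
      have good: "\<forall>x\<in>space PX. \<bar>tauhat N k \<omega> x - tau \<kappa> x\<bar> \<le> \<alpha> N \<and> \<bar>THRhat N k \<omega> x - THR \<kappa> x\<bar> \<le> \<rho> N"
        if w: "\<omega> \<in> space (?S N)" "\<omega> \<notin> Ea" "\<omega> \<notin> Er" for \<omega>
      proof
        fix x assume x: "x \<in> space PX"
        have "\<not> ((SUP j\<in>{..<K}. sup_dist PX (tauhat N j \<omega>) (tau \<kappa>)) > ereal (Ca * a N))" using Ea(2) w by blast
        from good_from_sup[OF this k_lt x] have g1: "\<bar>tauhat N k \<omega> x - tau \<kappa> x\<bar> \<le> Ca * a N" .
        have "\<not> ((SUP j\<in>{..<K}. sup_dist PX (THRhat N j \<omega>) (THR \<kappa>)) > ereal (Cr * r N))" using Er(2) w by blast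
        from good_from_sup[OF this k_lt x] have g2: "\<bar>THRhat N k \<omega> x - THR \<kappa> x\<bar> \<le> Cr * r N" .
        have "Ca * a N \<le> \<alpha> N" using a_pos by (simp add: \<alpha>_def Ca'_def less_imp_le mult_right_mono)
        moreover have "Cr * r N \<le> \<rho> N" using r_pos by (simp add: \<rho>_def Cr'_def less_imp_le mult_right_mono)
        ultimately show "\<bar>tauhat N k \<omega> x - tau \<kappa> x\<bar> \<le> \<alpha> N \<and> \<bar>THRhat N k \<omega> x - THR \<kappa> x\<bar> \<le> \<rho> N"
          using g1 g2 by linarith
      qed
      have jt: "(\<lambda>(\<omega>, x). tauhat N k \<omega> x) \<in> borel_measurable (?S N \<Otimes>\<^sub>M PX)"
        and jh: "(\<lambda>(\<omega>, x). THRhat N k \<omega> x) \<in> borel_measurable (?S N \<Otimes>\<^sub>M PX)"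
        using est_meas k_lt by auto
      have secm: "tauhat N k \<omega> \<in> borel_measurable PX \<and> THRhat N k \<omega> \<in> borel_measurable PX"
        if "\<omega> \<in> space (?S N)" for \<omega>
        using measurable_Pair2[OF jt that] measurable_Pair2[OF jh that] by simp
      have pm: "(\<lambda>\<omega>. (\<omega>, fst (\<omega> i))) \<in> measurable (?S N) (?S N \<Otimes>\<^sub>M PX)" if i: "i \<in> I" for i
      proof -
        have iN: "i \<in> {..<N}" using i IJ by blast
        have "(\<lambda>\<omega>. \<omega> i) \<in> measurable (PiM {..<N} (\<lambda>_. ?P)) ?P" using iN by (rule measurable_component_singleton)
        from measurable_compose[OF this fst_meas_obs]
        have "(\<lambda>\<omega>. fst (\<omega> i)) \<in> measurable (?S N) PX" by (simp add: Sdef)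
        then show ?thesis by (intro measurable_Pair measurable_ident_sets) auto
      qed
      have um: "(\<lambda>\<omega>. THRhat N k \<omega> (fst (\<omega> i))) \<in> borel_measurable (?S N)"
        and vm: "(\<lambda>\<omega>. tauhat N k \<omega> (fst (\<omega> i))) \<in> borel_measurable (?S N)" if i: "i \<in> I" for i
        using measurable_compose[OF pm[OF i] jh] measurable_compose[OF pm[OF i] jt] by simp_all
      have PHm: "(\<lambda>\<omega>. Psi_hat I (THRhat N k \<omega>) (tauhat N k \<omega>) \<omega> \<beta>) \<in> borel_measurable (?S N)" for \<beta>
        unfolding Psi_hat_def
        by (intro borel_measurable_divide borel_measurable_sum meas_ofb um vm measurable_const) simp_all
      define F3 where "F3 = {\<omega> \<in> space (?S N). Psi_hat I (THRhat N k \<omega>) (tauhat N k \<omega>) \<omega> (\<beta>d + t N) \<ge> lam} - (Ea \<union> Er)"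
      define F4 where "F4 = {\<omega> \<in> space (?S N). Psi_hat I (THRhat N k \<omega>) (tauhat N k \<omega>) \<omega> (\<beta>d - t N) \<le> lam} - (Ea \<union> Er)"
      have F3s: "F3 \<in> sets (?S N)"
      proof -
        have [measurable]: "(\<lambda>\<omega>. Psi_hat I (THRhat N k \<omega>) (tauhat N k \<omega>) \<omega> (\<beta>d + t N)) \<in> borel_measurable (?S N)" by (rule PHm)
        have "{\<omega> \<in> space (?S N). Psi_hat I (THRhat N k \<omega>) (tauhat N k \<omega>) \<omega> (\<beta>d + t N) \<ge> lam} \<in> sets (?S N)" by measurable
        then show ?thesis unfolding F3_def using Ea(1) Er(1) by auto
      qed
      have F4s: "F4 \<in> sets (?S N)"
      proof -
        have [measurable]: "(\<lambda>\<omega>. Psi_hat I (THRhat N k \<omega>) (tauhat N k \<omega>) \<omega> (\<beta>d - t N)) \<in> borel_measurable (?S N)" by (rule PHm)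
        have "{\<omega> \<in> space (?S N). Psi_hat I (THRhat N k \<omega>) (tauhat N k \<omega>) \<omega> (\<beta>d - t N) \<le> lam} \<in> sets (?S N)" by measurable
        then show ?thesis unfolding F4_def using Ea(1) Er(1) by auto
      qed
      have dep: "\<forall>\<omega>\<in>space (PiM {..<N} (\<lambda>_. ?P)). \<forall>\<omega>'\<in>space (PiM {..<N} (\<lambda>_. ?P)).
                 (\<forall>i\<in>J. \<omega> i = \<omega>' i) \<longrightarrow> tauhat N k \<omega> = tauhat N k \<omega>' \<and> THRhat N k \<omega> = THRhat N k \<omega>'"
      proof (intro ballI impI)
        fix \<omega> \<omega>' assume w: "\<omega> \<in> space (PiM {..<N} (\<lambda>_. ?P))" "\<omega>' \<in> space (PiM {..<N} (\<lambda>_. ?P))"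
          and eq: "\<forall>i\<in>J. \<omega> i = \<omega>' i"
        have "\<forall>i<N. fld N i \<noteq> k \<longrightarrow> \<omega> i = \<omega>' i" using eq by (auto simp: J_def I_def fold_set_def)
        moreover have "\<omega> \<in> space (?S N)" "\<omega>' \<in> space (?S N)" using w by (simp_all add: Sdef)
        ultimately show "tauhat N k \<omega> = tauhat N k \<omega>' \<and> THRhat N k \<omega> = THRhat N k \<omega>'"
          using training_only k_lt by blast
      qed
      have meas: "\<forall>\<omega>\<in>space (PiM {..<N} (\<lambda>_. ?P)). tauhat N k \<omega> \<in> borel_measurable PX \<and> THRhat N k \<omega> \<in> borel_measurable PX"
        using secm by (simp add: Sdef)
      have hb2: "\<forall>x\<in>space PX. \<bar>THRhat N k \<omega> x\<bar> \<le> 2" if "\<omega> \<in> space (?S N)" "\<omega> \<notin> Ea" "\<omega> \<notin> Er" for \<omega>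
      proof
        fix x assume x: "x \<in> space PX"
        have "\<bar>THRhat N k \<omega> x - THR \<kappa> x\<bar> \<le> \<rho> N" using good[OF that] x by blast
        then show "\<bar>THRhat N k \<omega> x\<bar> \<le> 2" using THR_bound[of \<kappa> x] tN(2) by (auto simp: abs_le_iff)
      qed
      have bnd: "16 / (real (card I) * (\<epsilon> N)\<^sup>2) \<le> \<eta> / 8"
        unfolding \<epsilon>_def G_def by (rule arith_conc[OF K_pos \<eta> Npos cI fold_arith[OF K_pos NK cardI]])
      have mF3: "measure (?S N) F3 \<le> \<eta> / 8"
      proof -
        have "measure (PiM {..<N} (\<lambda>_. ?P)) F3 \<le> 16 / (card I * (\<epsilon> N)\<^sup>2)"
        proof (rule fold_conc[OF PX kappa_meas disj IJ finI neI _ dep meas _ eN, where \<beta>="\<beta>d + t N"])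
          show "F3 \<in> sets (PiM {..<N} (\<lambda>_. ?P))" using F3s by (simp add: Sdef)
          show "\<forall>\<omega>\<in>F3. (\<forall>x\<in>space PX. \<bar>THRhat N k \<omega> x\<bar> \<le> 2) \<and>
             \<epsilon> N \<le> \<bar>Psi_hat I (THRhat N k \<omega>) (tauhat N k \<omega>) \<omega> (\<beta>d + t N) - (\<integral>x. THRhat N k \<omega> x * of_bool (tauhat N k \<omega> x - (\<beta>d + t N) * THRhat N k \<omega> x > 0) \<partial>PX)\<bar>"
          proof
            fix \<omega> assume w: "\<omega> \<in> F3"
            have w1: "\<omega> \<in> space (?S N)" "\<omega> \<notin> Ea" "\<omega> \<notin> Er" using w by (auto simp: F3_def)
            have ph: "Psi_hat I (THRhat N k \<omega>) (tauhat N k \<omega>) \<omega> (\<beta>d + t N) \<ge> lam" using w by (auto simp: F3_def)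
            have sm: "tauhat N k \<omega> \<in> borel_measurable PX" "THRhat N k \<omega> \<in> borel_measurable PX" using secm[OF w1(1)] by auto
            have mu: "(\<integral>x. THRhat N k \<omega> x * of_bool (tauhat N k \<omega> x - (\<beta>d + t N) * THRhat N k \<omega> x > 0) \<partial>PX)
                \<le> \<rho> N + (Psi PX \<kappa> lam (\<beta>d + t N / 2) + lam) + (2 * (\<alpha> N + M * \<rho> N) / t N) * (2 * B * (\<alpha> N + M * \<rho> N + t N))"
              by (rule mean_upper[OF PX kappa_meas sm good[OF w1] aN rN tpos less_imp_le[OF interior(1)] _ marg]) (use tmm in linarith)
            have h2: "0 < t N / 2 \<and> t N / 2 < \<delta>1" using tpos tmm by simp
            have Pup: "Psi PX \<kappa> lam (\<beta>d + t N / 2) \<le> - (c * (t N / 2) / 2)" using conjunct1[OF loc[rule_format, OF h2]] .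
            have "(\<integral>x. THRhat N k \<omega> x * of_bool (tauhat N k \<omega> x - (\<beta>d + t N) * THRhat N k \<omega> x > 0) \<partial>PX) \<le> lam - \<epsilon> N"
              by (rule arith_up[OF c_pos B0 sN rN eN _ Pup]) (use mu in \<open>simp_all add: t_def s_def\<close>)
            then show "(\<forall>x\<in>space PX. \<bar>THRhat N k \<omega> x\<bar> \<le> 2) \<and>
             \<epsilon> N \<le> \<bar>Psi_hat I (THRhat N k \<omega>) (tauhat N k \<omega>) \<omega> (\<beta>d + t N) - (\<integral>x. THRhat N k \<omega> x * of_bool (tauhat N k \<omega> x - (\<beta>d + t N) * THRhat N k \<omega> x > 0) \<partial>PX)\<bar>"
              using ph hb2[OF w1] by auto
          qed
        qed
        then show ?thesis using bnd by (simp add: Sdef)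
      qed
      have mF4: "measure (?S N) F4 \<le> \<eta> / 8"
      proof -
        have "measure (PiM {..<N} (\<lambda>_. ?P)) F4 \<le> 16 / (card I * (\<epsilon> N)\<^sup>2)"
        proof (rule fold_conc[OF PX kappa_meas disj IJ finI neI _ dep meas _ eN, where \<beta>="\<beta>d - t N"])
          show "F4 \<in> sets (PiM {..<N} (\<lambda>_. ?P))" using F4s by (simp add: Sdef)
          show "\<forall>\<omega>\<in>F4. (\<forall>x\<in>space PX. \<bar>THRhat N k \<omega> x\<bar> \<le> 2) \<and>
             \<epsilon> N \<le> \<bar>Psi_hat I (THRhat N k \<omega>) (tauhat N k \<omega>) \<omega> (\<beta>d - t N) - (\<integral>x. THRhat N k \<omega> x * of_bool (tauhat N k \<omega> x - (\<beta>d - t N) * THRhat N k \<omega> x > 0) \<partial>PX)\<bar>"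
          proof
            fix \<omega> assume w: "\<omega> \<in> F4"
            have w1: "\<omega> \<in> space (?S N)" "\<omega> \<notin> Ea" "\<omega> \<notin> Er" using w by (auto simp: F4_def)
            have ph: "Psi_hat I (THRhat N k \<omega>) (tauhat N k \<omega>) \<omega> (\<beta>d - t N) \<le> lam" using w by (auto simp: F4_def)
            have sm: "tauhat N k \<omega> \<in> borel_measurable PX" "THRhat N k \<omega> \<in> borel_measurable PX" using secm[OF w1(1)] by auto
            have mu: "(\<integral>x. THRhat N k \<omega> x * of_bool (tauhat N k \<omega> x - (\<beta>d - t N) * THRhat N k \<omega> x > 0) \<partial>PX)
                \<ge> - \<rho> N + (Psi PX \<kappa> lam (\<beta>d - t N / 2) + lam) - (2 * (\<alpha> N + M * \<rho> N) / t N) * (2 * B * (\<alpha> N + M * \<rho> N + t N))"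
              by (rule mean_lower[OF PX kappa_meas sm good[OF w1] aN rN tpos _ less_imp_le[OF interior(2)] marg]) (use tmm in linarith)
            have h2: "0 < t N / 2 \<and> t N / 2 < \<delta>1" using tpos tmm by simp
            have Plo: "Psi PX \<kappa> lam (\<beta>d - t N / 2) \<ge> c * (t N / 2) / 2" using conjunct2[OF loc[rule_format, OF h2]] .
            have "(\<integral>x. THRhat N k \<omega> x * of_bool (tauhat N k \<omega> x - (\<beta>d - t N) * THRhat N k \<omega> x > 0) \<partial>PX) \<ge> lam + \<epsilon> N"
              by (rule arith_lo[OF c_pos B0 sN rN eN _ Plo]) (use mu in \<open>simp_all add: t_def s_def\<close>)
            then show "(\<forall>x\<in>space PX. \<bar>THRhat N k \<omega> x\<bar> \<le> 2) \<and>
             \<epsilon> N \<le> \<bar>Psi_hat I (THRhat N k \<omega>) (tauhat N k \<omega>) \<omega> (\<beta>d - t N) - (\<integral>x. THRhat N k \<omega> x * of_bool (tauhat N k \<omega> x - (\<beta>d - t N) * THRhat N k \<omega> x > 0) \<partial>PX)\<bar>"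
              using ph hb2[OF w1] by auto
          qed
        qed
        then show ?thesis using bnd by (simp add: Sdef)
      qed
      define E where "E = Ea \<union> Er \<union> F3 \<union> F4"
      have Es: "E \<in> sets (?S N)" using Ea(1) Er(1) F3s F4s by (simp add: E_def)
      have mE: "measure (?S N) E < \<eta>"
      proof -
        have "measure (?S N) E \<le> measure (?S N) (Ea \<union> Er \<union> F3) + measure (?S N) F4"
          unfolding E_def by (rule measure_Un_le) (use Ea(1) Er(1) F3s F4s in auto)
        also have "measure (?S N) (Ea \<union> Er \<union> F3) \<le> measure (?S N) (Ea \<union> Er) + measure (?S N) F3"
          by (rule measure_Un_le) (use Ea(1) Er(1) F3s in auto)
        also have "measure (?S N) (Ea \<union> Er) \<le> measure (?S N) Ea + measure (?S N) Er"
          by (rule measure_Un_le) (use Ea(1) Er(1) in auto)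
        finally show ?thesis using Ea(3) Er(3) mF3 mF4 \<eta> by linarith
      qed
      have sub: "{\<omega> \<in> space (?S N). ereal (utility PX \<kappa> \<beta>d (rule (tau \<kappa>) (THR \<kappa>) \<beta>d)
                         - utility PX \<kappa> \<beta>d (rule (tauhat N k \<omega>) (THRhat N k \<omega>) (betahat N \<omega>)))
           > ereal (Cf * max (max ((a N)\<^sup>2) ((r N)\<^sup>2)) (1 / real N))} \<subseteq> E"
      proof (rule subsetI, rule ccontr)
        fix \<omega> assume w: "\<omega> \<in> {\<omega> \<in> space (?S N). ereal (utility PX \<kappa> \<beta>d (rule (tau \<kappa>) (THR \<kappa>) \<beta>d)
                         - utility PX \<kappa> \<beta>d (rule (tauhat N k \<omega>) (THRhat N k \<omega>) (betahat N \<omega>)))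
           > ereal (Cf * max (max ((a N)\<^sup>2) ((r N)\<^sup>2)) (1 / real N))}" and nE: "\<omega> \<notin> E"
        have ws: "\<omega> \<in> space (?S N)" using w by simp
        have big: "utility PX \<kappa> \<beta>d (rule (tau \<kappa>) (THR \<kappa>) \<beta>d)
                         - utility PX \<kappa> \<beta>d (rule (tauhat N k \<omega>) (THRhat N k \<omega>) (betahat N \<omega>))
           > Cf * max (max ((a N)\<^sup>2) ((r N)\<^sup>2)) (1 / real N)" using w by simp
        have nots: "\<omega> \<notin> Ea" "\<omega> \<notin> Er" "\<omega> \<notin> F3" "\<omega> \<notin> F4" using nE by (auto simp: E_def)
        have gd: "\<forall>x\<in>space PX. \<bar>tauhat N k \<omega> x - tau \<kappa> x\<bar> \<le> \<alpha> N \<and> \<bar>THRhat N k \<omega> x - THR \<kappa> x\<bar> \<le> \<rho> N"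
          using good[OF ws nots(1,2)] .
        have br: "betahat N \<omega> \<in> {0..M} \<and>
               (\<forall>\<beta>\<in>{0..M}. \<beta> < betahat N \<omega> \<longrightarrow>
                  Psi_hat (fold_set (fld N) N k) (THRhat N k \<omega>) (tauhat N k \<omega>) \<omega> \<beta> \<ge> lam) \<and>
               (\<forall>\<beta>\<in>{0..M}. betahat N \<omega> < \<beta> \<longrightarrow>
                  Psi_hat (fold_set (fld N) N k) (THRhat N k \<omega>) (tauhat N k \<omega>) \<omega> \<beta> \<le> lam)"
          using betahat_root ws by blast
        have bt: "\<bar>betahat N \<omega> - \<beta>d\<bar> \<le> t N"
        proof (rule ccontr)
          assume "\<not> \<bar>betahat N \<omega> - \<beta>d\<bar> \<le> t N"
          then consider "betahat N \<omega> > \<beta>d + t N" | "betahat N \<omega> < \<beta>d - t N" by linarith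
          then show False
          proof cases
            case 1
            have "\<beta>d + t N \<in> {0..M}" using tmm interior tpos by auto
            then have "Psi_hat I (THRhat N k \<omega>) (tauhat N k \<omega>) \<omega> (\<beta>d + t N) \<ge> lam"
              using br 1 by (simp add: I_def)
            then have "\<omega> \<in> F3" using ws nots by (simp add: F3_def)
            then show False using nots by simp
          next
            case 2
            have "\<beta>d - t N \<in> {0..M}" using tmm interior tpos by auto
            then have "Psi_hat I (THRhat N k \<omega>) (tauhat N k \<omega>) \<omega> (\<beta>d - t N) \<le> lam"
              using br 2 by (simp add: I_def)
            then have "\<omega> \<in> F4" using ws nots by (simp add: F4_def)
            then show False using nots by simp
          qed
        qed
        have sm: "tauhat N k \<omega> \<in> borel_measurable PX" "THRhat N k \<omega> \<in> borel_measurable PX" using secm[OF ws] by auto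
        have Ub: "utility PX \<kappa> \<beta>d (rule (tau \<kappa>) (THR \<kappa>) \<beta>d)
                         - utility PX \<kappa> \<beta>d (rule (tauhat N k \<omega>) (THRhat N k \<omega>) (betahat N \<omega>))
                  \<le> 2 * B * (\<alpha> N + M * \<rho> N + t N)\<^sup>2"
          by (rule U_bound[OF PX kappa_meas sm gd aN rN less_imp_le[OF tpos] _ _ bt less_imp_le[OF interior(1)] marg])
             (use br in auto)
        have Deq: "\<alpha> N + M * \<rho> N + t N = pp * a N + qq * r N + gg / sqrt (real N)"
          unfolding \<alpha>_def \<rho>_def t_def s_def \<epsilon>_def pp_def qq_def gg_def using c_pos
          by (simp add: field_simps)
        have D0: "\<alpha> N + M * \<rho> N + t N \<ge> 0" using aN rN M0 tpos by simp
        have pq: "pp \<ge> 0" "qq \<ge> 0" "gg \<ge> 0" using Ca'0 Cr'0 B0 c_pos M0 G0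
          by (simp_all add: pp_def qq_def gg_def)
        have "(\<alpha> N + M * \<rho> N + t N)\<^sup>2 \<le> (pp + qq + gg)\<^sup>2 * max (max ((a N)\<^sup>2) ((r N)\<^sup>2)) (1 / real N)"
          by (rule rate_arith[OF pq a_pos[rule_format] r_pos[rule_format] Npos D0]) (simp add: Deq)
        then have "2 * B * (\<alpha> N + M * \<rho> N + t N)\<^sup>2 \<le> 2 * B * ((pp + qq + gg)\<^sup>2 * max (max ((a N)\<^sup>2) ((r N)\<^sup>2)) (1 / real N))"
          using B0 by (intro mult_left_mono) auto
        then have "2 * B * (\<alpha> N + M * \<rho> N + t N)\<^sup>2 \<le> Cf * max (max ((a N)\<^sup>2) ((r N)\<^sup>2)) (1 / real N)"
          by (simp add: Cf_def mult_ac)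
        then show False using Ub big by linarith
      qed
      show "\<exists>E\<in>sets (?S N).
        {\<omega> \<in> space (?S N). ereal (utility PX \<kappa> \<beta>d (rule (tau \<kappa>) (THR \<kappa>) \<beta>d)
                         - utility PX \<kappa> \<beta>d (rule (tauhat N k \<omega>) (THRhat N k \<omega>) (betahat N \<omega>)))
           > ereal (Cf * max (max ((a N)\<^sup>2) ((r N)\<^sup>2)) (1 / real N))} \<subseteq> E \<and> measure (?S N) E < \<eta>"
        using Es sub mE by blast
    qed
  qed
qed


end
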